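(* Let $k,l,m$ be positive integers, $n=(l+1)k$, and let $A\in\mathbb{R}^{m\times n}$ have $2k$-restricted isometry constant $\delta_{2k}\in[\frac{\sqrt{2}}{2},1)$. Let $x\in\mathbb{R}^n$, $\epsilon\ge 0$, $e\in\mathbb{R}^m$ with $\|e\|_2\le\epsilon$, and $y=Ax+e$. For $p\in(0,1)$ let $x^{\star}$ be a solution of $$\min_{\gamma\in\mathbb{R}^n}\|\gamma\|_p\quad\text{subject to}\quad \|y-A\gamma\|_2\le\epsilon .$$ Let $T_0=\{1,\dots,k\}$ and $T_0^c=\{k+1,\dots,n\}$. Then for each $p\in(0,1)$ such that $C(p)<1$, where $$C(p)=\begin{cases}\left(\dfrac{\big((2-\delta_{2k})^{1-\frac{2}{p}}+2\delta_{2k}\big)g(p)}{1-\delta_{2k}}\right)^{p/2}, & p\in(0,p^{\star}],\\[2ex] \left(\dfrac{(2-\delta_{2k})^{1-\frac{2}{p}}g(p)+2^{2-\frac{2}{p}}\delta_{2k}}{1-\delta_{2k}}\right)^{p/2}, & p\in(p^{\star},1),\end{cases}$$ the solution $x^{\star}$ obeys $$\|x-x^{\star}\|_p^p\le C_0\|x_{T_0^c}\|_p^p+C_1k^{1-\frac{p}{2}}\epsilon^p,\qquad C_0=\frac{2(1+C(p))}{1-C(p)},\quad C_1=\frac{2^{\frac{3p}{2}+1}}{(1-\delta_{2k})^{\frac{p}{2}}(1-C(p))}.$$ In particular, if $\epsilon=0$ and $x$ is $k$-sparse, then $x^{\star}=x$.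
   Context: For $1\le s\le n$, the $s$-restricted isometry constant $\delta_s$ of $A$ is the smallest constant such that $(1-\delta_s)\|z\|_2^2\le\|Az\|_2^2\le(1+\delta_s)\|z\|_2^2$ for all $s$-sparse $z\in\mathbb{R}^n$ (i.e. with at most $s$ nonzero entries). For $p\in(0,1)$, $\|\gamma\|_p=(\sum_i|\gamma_i|^p)^{1/p}$. For a vector $v$ and index set $T$, $v_T$ denotes the vector equal to $v$ on $T$ and zero elsewhere. $g(p)=\frac{p}{2}(1-\frac{p}{2})^{\frac{2}{p}-1}$ for $p\in(0,1]$. $p^{\star}\approx 0.45418$ is the unique solution in $(0,1]$ of $f(p)=1$, where $f(p)=(\frac{p}{2})^{1/2}(2-p)^{\frac1p-\frac12}$. *)

theory Defs
  imports Complex_Main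
begin

text \<open>Vectors in R^n are represented as functions nat => real, only indices 0..n-1
  are relevant (index j corresponds to the paper's index j+1).\<close>

definition matvec :: "(nat \<Rightarrow> nat \<Rightarrow> real) \<Rightarrow> nat \<Rightarrow> (nat \<Rightarrow> real) \<Rightarrow> nat \<Rightarrow> real" where
  "matvec A n z = (\<lambda>i. \<Sum>j<n. A i j * z j)"

definition sqnorm :: "nat \<Rightarrow> (nat \<Rightarrow> real) \<Rightarrow> real" where
  "sqnorm n z = (\<Sum>j<n. (z j)\<^sup>2)"

definition norm2 :: "nat \<Rightarrow> (nat \<Rightarrow> real) \<Rightarrow> real" where
  "norm2 n z = sqrt (sqnorm n z)"

definition pnorm_pow :: "real \<Rightarrow> nat \<Rightarrow> (nat \<Rightarrow> real) \<Rightarrow> real" where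
  "pnorm_pow p n z = (\<Sum>j<n. \<bar>z j\<bar> powr p)"

definition pnorm :: "real \<Rightarrow> nat \<Rightarrow> (nat \<Rightarrow> real) \<Rightarrow> real" where
  "pnorm p n z = (pnorm_pow p n z) powr (1 / p)"

definition sparse :: "nat \<Rightarrow> nat \<Rightarrow> (nat \<Rightarrow> real) \<Rightarrow> bool" where
  "sparse s n z \<longleftrightarrow> card {j. j < n \<and> z j \<noteq> 0} \<le> s"

definition ric :: "(nat \<Rightarrow> nat \<Rightarrow> real) \<Rightarrow> nat \<Rightarrow> nat \<Rightarrow> nat \<Rightarrow> real" where
  "ric A m n s = Inf {d. \<forall>z. sparse s n z \<longrightarrow>
      (1 - d) * sqnorm n z \<le> sqnorm m (matvec A n z) \<and>
      sqnorm m (matvec A n z) \<le> (1 + d) * sqnorm n z}"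

definition g :: "real \<Rightarrow> real" where
  "g p = (p / 2) * (1 - p / 2) powr (2 / p - 1)"

definition f :: "real \<Rightarrow> real" where
  "f p = (p / 2) powr (1 / 2) * (2 - p) powr (1 / p - 1 / 2)"

definition pstar :: real where
  "pstar = (THE p. 0 < p \<and> p \<le> 1 \<and> f p = 1)"

definition Cp :: "real \<Rightarrow> real \<Rightarrow> real" where
  "Cp d p = (if p \<le> pstar
     then (((2 - d) powr (1 - 2 / p) + 2 * d) * g p / (1 - d)) powr (p / 2)
     else (((2 - d) powr (1 - 2 / p) * g p + 2 powr (2 - 2 / p) * d) / (1 - d)) powr (p / 2))"

end

theory Submission
  imports Defs "HOL-Analysis.Convex" "HOL-Analysis.L2_Norm"
begin


lemma powr_subadd:
  fixes a b p :: real
  assumes "0 < p" "p \<le> 1" "0 \<le> a" "0 \<le> b"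
  shows "(a + b) powr p \<le> a powr p + b powr p"
proof (cases "a + b = 0")
  case True
  then show ?thesis using assms by auto
next
  case False
  then have ab: "a + b > 0" using assms by auto
  have k: "z * (a + b) powr (p - 1) \<le> z powr p" if "0 \<le> z" "z \<le> a + b" for z
  proof (cases "z = 0")
    case True then show ?thesis by simp
  next
    case False
    then have z: "z > 0" using that by auto
    have "(a + b) powr (p - 1) \<le> z powr (p - 1)"
      using z that assms by (intro powr_mono2') auto
    then have "z * (a + b) powr (p - 1) \<le> z * z powr (p - 1)"
      using z by (intro mult_left_mono) auto
    also have "\<dots> = z powr p" using z by (simp add: powr_mult_base)
    finally show ?thesis .
  qed
  have "(a + b) powr p = (a + b) * (a + b) powr (p - 1)"
    using ab by (simp add: powr_mult_base)
  also have "\<dots> = a * (a + b) powr (p - 1) + b * (a + b) powr (p - 1)"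
    by (simp add: algebra_simps)
  also have "\<dots> \<le> a powr p + b powr p"
    using k[of a] k[of b] assms by (intro add_mono) auto
  finally show ?thesis .
qed

lemma abs_powr_subadd:
  fixes a b p :: real
  assumes "0 < p" "p \<le> 1"
  shows "\<bar>a + b\<bar> powr p \<le> \<bar>a\<bar> powr p + \<bar>b\<bar> powr p"
proof -
  have "\<bar>a + b\<bar> powr p \<le> (\<bar>a\<bar> + \<bar>b\<bar>) powr p"
    using assms by (intro powr_mono2) auto
  also have "\<dots> \<le> \<bar>a\<bar> powr p + \<bar>b\<bar> powr p"
    using assms by (intro powr_subadd) auto
  finally show ?thesis .
qed

lemma powr_tangent:
  fixes u m \<gamma> :: real
  assumes "0 < \<gamma>" "\<gamma> \<le> 1" "0 < m" "0 \<le> u"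
  shows "u powr \<gamma> \<le> m powr \<gamma> * (\<gamma> * (u / m) + (1 - \<gamma>))"
proof (cases "u = 0")
  case True
  then show ?thesis using assms by simp
next
  case False
  then have u: "u > 0" using assms by auto
  have "(u / m) powr \<gamma> * 1 powr (1 - \<gamma>) \<le> \<gamma> * (u / m) + (1 - \<gamma>) * 1"
    using assms u by (intro Youngs_inequality_0) auto
  then have "u powr \<gamma> / m powr \<gamma> \<le> \<gamma> * (u / m) + (1 - \<gamma>)"
    using u assms by (simp add: powr_divide)
  then show ?thesis using assms by (simp add: field_simps)
qed

lemma bernoulli_powr:
  fixes c t :: real
  assumes "1 \<le> c" "0 \<le> t"
  shows "1 + c * t \<le> (1 + t) powr c"
proof -
  define X where "X = (1 + t) powr c"
  have X: "X > 0" using assms by (simp add: X_def)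
  have "X powr (1 / c) * 1 powr (1 - 1 / c) \<le> (1 / c) * X + (1 - 1 / c) * 1"
    using assms X by (intro Youngs_inequality_0) auto
  moreover have "X powr (1 / c) = 1 + t"
    using assms by (simp add: X_def powr_powr)
  ultimately have "1 + t \<le> X / c + (1 - 1 / c)" by simp
  then have "c * (1 + t) \<le> c * (X / c + (1 - 1 / c))"
    using assms by (intro mult_left_mono) auto
  also have "\<dots> = X + c - 1" using assms by (simp add: field_simps)
  finally show ?thesis unfolding X_def by (simp add: algebra_simps)
qed

lemma g_max:
  fixes p t :: real
  assumes "0 < p" "p < 1" "0 \<le> t" "t \<le> 1"
  shows "t * (1 - t) powr (2 / p - 1) \<le> g p"
proof -
  define a where "a = 2 / p - 1"
  define t0 where "t0 = p / 2"
  have a1: "a > 1" using assms by (simp add: a_def field_simps)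
  have t0: "0 < t0" "t0 < 1" using assms by (auto simp: t0_def)
  have gdef: "g p = t0 * (1 - t0) powr a" by (simp add: g_def a_def t0_def)
  have gpos: "g p > 0" using t0 by (simp add: gdef)
  show ?thesis
  proof (cases "t = 0 \<or> t = 1")
    case True
    then show ?thesis using gpos a1 by (auto simp: a_def[symmetric])
  next
    case False
    then have t: "0 < t" "t < 1" using assms by auto
    have l1: "ln (t / t0) \<le> t / t0 - 1" using t t0 by (intro ln_le_minus_one) auto
    have l2: "ln ((1 - t) / (1 - t0)) \<le> (1 - t) / (1 - t0) - 1" using t t0 by (intro ln_le_minus_one) auto
    have rel: "t / t0 - 1 + a * ((1 - t) / (1 - t0) - 1) = 0"
      using assms unfolding a_def t0_def by (simp add: field_simps)
    have "ln t - ln t0 + a * (ln (1 - t) - ln (1 - t0)) \<le> 0"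
    proof -
      have "ln t - ln t0 = ln (t / t0)" using t t0 by (simp add: ln_div)
      moreover have "ln (1 - t) - ln (1 - t0) = ln ((1 - t) / (1 - t0))" using t t0 by (simp add: ln_div)
      ultimately have "ln t - ln t0 + a * (ln (1 - t) - ln (1 - t0)) = ln (t / t0) + a * ln ((1 - t) / (1 - t0))" by simp
      also have "\<dots> \<le> t / t0 - 1 + a * ((1 - t) / (1 - t0) - 1)"
        using l1 l2 a1 by (intro add_mono mult_left_mono) auto
      finally show ?thesis using rel by simp
    qed
    then have "ln (t * (1 - t) powr a) \<le> ln (t0 * (1 - t0) powr a)"
      using t t0 by (simp add: ln_mult ln_powr algebra_simps)
    then have "t * (1 - t) powr a \<le> t0 * (1 - t0) powr a"
      using t t0 by (subst (asm) ln_le_cancel_iff) auto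
    then show ?thesis by (simp add: gdef a_def)
  qed
qed


lemma phiA:
  fixes p s :: real
  assumes "0 < p" "p \<le> 2/5" "0 \<le> s" "s \<le> 1/2"
  shows "(1 - s) powr (1/p - 1/2) * s powr (1/2) + s powr (1/p) \<le> sqrt (2 * g p)"
proof -
  define c where "c = 1/p - 1/2"
  have c2: "c \<ge> 2" using assms by (simp add: c_def field_simps)
  define u where "u = 1 - s"
  have u: "u \<ge> 1/2" "u > 0" "s \<le> u" using assms by (auto simp: u_def)
  have claim: "u powr c + s powr c \<le> (1 - s/2) powr c"
  proof (cases "s = 0")
    case True then show ?thesis by (simp add: u_def)
  next
    case False
    then have s: "s > 0" using assms by auto
    define t where "t = s / (2 * u)"
    have t: "t \<ge> 0" using s u by (simp add: t_def)
    have e: "1 - s/2 = u * (1 + t)" using u by (simp add: t_def u_def field_simps)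
    have "(1 - s/2) powr c = u powr c * (1 + t) powr c"
      using u t by (simp add: e powr_mult)
    also have "\<dots> \<ge> u powr c * (1 + c * t)"
      using bernoulli_powr[of c t] c2 t by (intro mult_left_mono) auto
    finally have A: "u powr c * (1 + c * t) \<le> (1 - s/2) powr c" .
    have "u powr c * (1 + c * t) = u powr c + (c/2) * (u powr (c - 1) * s)"
    proof -
      have pd: "u powr (c - 1) = u powr c / u" using u by (simp add: powr_diff)
      have "u powr c * (1 + c * t) = u powr c + (c/2) * (u powr c / u * s)"
        using u by (simp add: t_def field_simps)
      then show ?thesis using pd by simp
    qed
    moreover have "s powr c \<le> (c/2) * (u powr (c - 1) * s)"
    proof -
      have "s powr (c - 1) \<le> u powr (c - 1)" using s u c2 by (intro powr_mono2) auto
      then have "s powr (c - 1) * s \<le> u powr (c - 1) * s" using s by (intro mult_right_mono) auto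
      also have "\<dots> \<le> (c/2) * (u powr (c - 1) * s)"
      proof -
        have "0 \<le> u powr (c - 1) * s" using s by simp
        moreover have "1 \<le> c/2" using c2 by simp
        ultimately show ?thesis using mult_right_mono[of 1 "c/2" "u powr (c - 1) * s"] by simp
      qed
      finally have "s powr (c - 1) * s \<le> (c/2) * (u powr (c - 1) * s)" .
      moreover have "s powr (c - 1) * s = s powr c"
        using powr_mult_base[of s "c - 1"] s by (simp add: mult.commute)
      ultimately show ?thesis by simp
    qed
    ultimately show ?thesis using A by linarith
  qed
  have lhs: "(1 - s) powr (1/p - 1/2) * s powr (1/2) + s powr (1/p) = s powr (1/2) * (u powr c + s powr c)"
  proof (cases "s = 0")
    case True then show ?thesis using assms by simp
  next
    case False
    then have "s powr (1/p) = s powr (1/2) * s powr c" by (simp add: c_def flip: powr_add)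
    then show ?thesis unfolding u_def c_def by (simp add: distrib_left mult.commute)
  qed
  have "s powr (1/2) * (u powr c + s powr c) \<le> s powr (1/2) * (1 - s/2) powr c"
    using claim by (intro mult_left_mono) auto
  also have "\<dots> \<le> sqrt (2 * g p)"
  proof (rule real_le_rsqrt)
    have e1: "(s powr (1/2))\<^sup>2 = s" using assms by (simp add: powr_half_sqrt)
    have e2: "((1 - s/2) powr c)\<^sup>2 = (1 - s/2) powr (2/p - 1)"
    proof -
      have "((1 - s/2) powr c)\<^sup>2 = ((1 - s/2) powr c) powr 2"
        by simp
      also have "\<dots> = (1 - s/2) powr (c * 2)" by (simp only: powr_powr)
      also have "c * 2 = 2/p - 1" by (simp add: c_def field_simps)
      finally show ?thesis .
    qed
    have "(s powr (1/2) * (1 - s/2) powr c)\<^sup>2 = s * (1 - s/2) powr (2/p - 1)"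
      by (simp only: power_mult_distrib e1 e2)
    also have "\<dots> = 2 * ((s/2) * (1 - s/2) powr (2/p - 1))" by simp
    also have "\<dots> \<le> 2 * g p" using g_max[of p "s/2"] assms by auto
    finally show "(s powr (1/2) * (1 - s/2) powr c)\<^sup>2 \<le> 2 * g p" .
  qed
  finally show ?thesis using lhs by simp
qed


lemma powr_sq: "(x powr a)\<^sup>2 = x powr (2 * a)" for x a :: real
  by (simp add: power2_eq_square powr_add[symmetric])

lemma phi_split:
  fixes p s :: real
  assumes "0 \<le> s"
  shows "(1 - s) powr (1/p - 1/2) * s powr (1/2) + s powr (1/p) = s powr (1/2) * ((1 - s) powr (1/p - 1/2) + s powr (1/p - 1/2))"
proof (cases "s = 0")
  case True then show ?thesis by simp
next
  case False
  then have "s powr (1/p) = s powr (1/2) * s powr (1/p - 1/2)" by (simp flip: powr_add)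
  then show ?thesis by (simp add: distrib_left mult.commute)
qed

lemma poly_aux: "0 \<le> d \<Longrightarrow> d \<le> 1 \<Longrightarrow> (1 - d) * (1 + d\<^sup>2)\<^sup>2 \<le> (1::real)"
proof -
  assume d: "0 \<le> d" "d \<le> 1"
  have e: "(1 - d) * (1 + d\<^sup>2)\<^sup>2 = 1 - d * ((1 - d)\<^sup>2 + d\<^sup>2 * (1 - d + d\<^sup>2))"
    by (simp add: power2_eq_square algebra_simps)
  have "1 - d + d\<^sup>2 \<ge> 0" using d by (simp add: power2_eq_square)
  then have "0 \<le> d * ((1 - d)\<^sup>2 + d\<^sup>2 * (1 - d + d\<^sup>2))" using d by simp
  then show ?thesis using e by linarith
qed

lemma phiB:
  fixes p s :: real
  assumes "2/5 \<le> p" "p < 1" "0 \<le> s" "s \<le> 1/2"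
  shows "(1 - s) powr (1/p - 1/2) * s powr (1/2) + s powr (1/p) \<le> 2 powr (1 - 1/p)"
proof -
  define c where "c = 1/p - 1/2"
  have p0: "p > 0" using assms by simp
  have c2: "c \<le> 2" "c > 1/2" using assms p0 by (auto simp: c_def field_simps)
  define \<gamma> where "\<gamma> = c / 2"
  have g: "0 < \<gamma>" "\<gamma> \<le> 1" using c2 by (auto simp: \<gamma>_def)
  define u where "u = 1 - s"
  have u: "u \<ge> 1/2" using assms by (simp add: u_def)
  define m where "m = (u\<^sup>2 + s\<^sup>2) / 2"
  have m: "m > 0" using u by (simp add: m_def add_pos_nonneg)
  have uc: "u powr c = (u\<^sup>2) powr \<gamma>"
  proof -
    have "(u\<^sup>2) powr \<gamma> = (u powr 2) powr \<gamma>" using u by simp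
    also have "\<dots> = u powr c" by (simp add: powr_powr \<gamma>_def)
    finally show ?thesis by simp
  qed
  have sc: "s powr c = (s\<^sup>2) powr \<gamma>"
  proof -
    have "(s\<^sup>2) powr \<gamma> = (s powr 2) powr \<gamma>" using assms by simp
    also have "\<dots> = s powr c" by (simp add: powr_powr \<gamma>_def)
    finally show ?thesis by simp
  qed
  have t1: "(u\<^sup>2) powr \<gamma> \<le> m powr \<gamma> * (\<gamma> * (u\<^sup>2 / m) + (1 - \<gamma>))"
    using g m by (intro powr_tangent) auto
  have t2: "(s\<^sup>2) powr \<gamma> \<le> m powr \<gamma> * (\<gamma> * (s\<^sup>2 / m) + (1 - \<gamma>))"
    using g m by (intro powr_tangent) auto
  have "m powr \<gamma> * (\<gamma> * (u\<^sup>2 / m) + (1 - \<gamma>)) + m powr \<gamma> * (\<gamma> * (s\<^sup>2 / m) + (1 - \<gamma>))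
        = m powr \<gamma> * (\<gamma> * ((u\<^sup>2 + s\<^sup>2) / m) + 2 * (1 - \<gamma>))"
    by (simp add: algebra_simps add_divide_distrib)
  also have "(u\<^sup>2 + s\<^sup>2) / m = 2"
  proof -
    have mm: "u\<^sup>2 + s\<^sup>2 = 2 * m" by (simp add: m_def)
    show ?thesis using m by (simp add: mm)
  qed
  finally have sum2: "u powr c + s powr c \<le> 2 * m powr \<gamma>"
    using t1 t2 uc sc by (simp add: algebra_simps)
  have lhs: "(1 - s) powr (1/p - 1/2) * s powr (1/2) + s powr (1/p) = s powr (1/2) * (u powr c + s powr c)"
    using phi_split[OF assms(3), of p] by (simp add: u_def c_def)
  have A: "s powr (1/2) * (u powr c + s powr c) \<le> 2 * s powr (1/2) * m powr \<gamma>"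
    using mult_left_mono[OF sum2, of "s powr (1/2)"] by (simp add: algebra_simps)
  define d where "d = 1 - 2 * s"
  have d: "0 \<le> d" "d \<le> 1" using assms by (auto simp: d_def)
  have md: "m = (1 + d\<^sup>2) / 4" by (simp add: m_def d_def u_def power2_eq_square field_simps)
  have B: "2 * s * (1 + d\<^sup>2) powr c \<le> 1"
  proof -
    have "(1 + d\<^sup>2) powr c \<le> (1 + d\<^sup>2) powr 2"
      using c2 by (intro powr_mono) auto
    also have "\<dots> = (1 + d\<^sup>2)\<^sup>2" by simp
    finally have "2 * s * (1 + d\<^sup>2) powr c \<le> 2 * s * (1 + d\<^sup>2)\<^sup>2"
      using assms by (intro mult_left_mono) auto
    also have "2 * s * (1 + d\<^sup>2)\<^sup>2 = (1 - d) * (1 + d\<^sup>2)\<^sup>2" by (simp add: d_def)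
    also have "(1 - d) * (1 + d\<^sup>2)\<^sup>2 \<le> 1" using poly_aux d by simp
    finally show ?thesis .
  qed
  have sq: "(2 * s powr (1/2) * m powr \<gamma>)\<^sup>2 \<le> (2 powr (1 - 1/p))\<^sup>2"
  proof -
    have e1: "(s powr (1/2))\<^sup>2 = s" using assms by (simp add: powr_half_sqrt)
    have e2: "(m powr \<gamma>)\<^sup>2 = m powr c" by (simp add: powr_sq \<gamma>_def)
    have e3: "m powr c = (1 + d\<^sup>2) powr c / 4 powr c" by (simp add: md powr_divide)
    have e4: "(4::real) powr c = 2 powr (2 * c)"
    proof -
      have "(2::real) powr (2 * c) = ((2::real) powr 2) powr c" by (simp only: powr_powr)
      then show ?thesis by simp
    qed
    define P where "P = (2::real) powr (2 * c)"
    have P: "P > 0" by (simp add: P_def)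
    have "(2 * s powr (1/2) * m powr \<gamma>)\<^sup>2 = 4 * (s powr (1/2))\<^sup>2 * (m powr \<gamma>)\<^sup>2"
      by (simp add: power_mult_distrib)
    also have "\<dots> = 2 * (2 * s * (1 + d\<^sup>2) powr c) / P"
      by (simp only: e1 e2 e3 e4 P_def[symmetric]) simp
    also have "\<dots> \<le> 2 * 1 / P"
      using B P by (intro divide_right_mono mult_left_mono) auto
    also have "2 * 1 / P = (2::real) powr (1 - 2 * c)"
      unfolding P_def by (simp only: powr_diff powr_one_gt_zero_iff) simp
    also have "(2::real) powr (1 - 2 * c) = (2 powr (1 - 1/p))\<^sup>2"
    proof -
      have "1 - 2 * c = 2 * (1 - 1/p)" by (simp add: c_def algebra_simps)
      then show ?thesis by (simp only: powr_sq)
    qed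
    finally show ?thesis .
  qed
  have "2 * s powr (1/2) * m powr \<gamma> \<le> 2 powr (1 - 1/p)"
    by (rule power2_le_imp_le[OF sq]) simp
  with A lhs show ?thesis by linarith
qed


definition Lf :: "real \<Rightarrow> real" where
  "Lf p = ln (p / 2) / 2 + (1 / p - 1 / 2) * ln (2 - p)"

lemma f_exp: "0 < p \<Longrightarrow> p < 2 \<Longrightarrow> f p = exp (Lf p)"
  unfolding f_def Lf_def powr_def by (simp add: exp_add[symmetric] algebra_simps)

lemma Lf_deriv:
  assumes "0 < p" "p < 2"
  shows "(Lf has_real_derivative (- ln (2 - p) / p\<^sup>2)) (at p)"
proof -
  have d1: "((\<lambda>p. ln (p / 2) / 2) has_real_derivative (1 / (2 * p))) (at p)"
    using assms by (auto intro!: derivative_eq_intros simp: field_simps)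
  have d2: "((\<lambda>p. 1 / p - 1 / 2) has_real_derivative (- 1 / p\<^sup>2)) (at p)"
    using assms by (auto intro!: derivative_eq_intros simp: field_simps power2_eq_square)
  have d3: "((\<lambda>p. ln (2 - p)) has_real_derivative (- 1 / (2 - p))) (at p)"
    using assms by (auto intro!: derivative_eq_intros simp: field_simps)
  have "((\<lambda>p. ln (p / 2) / 2 + (1 / p - 1 / 2) * ln (2 - p)) has_real_derivative
      (1 / (2 * p) + ((1 / p - 1 / 2) * (- 1 / (2 - p)) + (- 1 / p\<^sup>2) * ln (2 - p)))) (at p)"
    by (intro DERIV_add d1 DERIV_mult' d2 d3)
  moreover have "1 / (2 * p) + ((1 / p - 1 / 2) * (- 1 / (2 - p)) + (- 1 / p\<^sup>2) * ln (2 - p)) = - ln (2 - p) / p\<^sup>2"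
  proof -
    have a: "(1 / p - 1 / 2) * (- 1 / (2 - p)) = - (1 / (2 * p))" using assms by (simp add: field_simps)
    show ?thesis unfolding a by simp
  qed
  ultimately show ?thesis unfolding Lf_def[abs_def] by simp
qed

lemma Lf_cont: "0 < a \<Longrightarrow> b < 2 \<Longrightarrow> continuous_on {a..b} Lf"
proof -
  assume ab: "0 < a" "b < 2"
  show ?thesis
  proof (intro continuous_at_imp_continuous_on ballI)
    fix x assume "x \<in> {a..b}"
    then have "0 < x" "x < 2" using ab by auto
    then show "isCont Lf x" using Lf_deriv DERIV_isCont by blast
  qed
qed

lemma Lf_dec:
  assumes "0 < a" "a < b" "b \<le> 1"
  shows "Lf b < Lf a"
proof (rule DERIV_neg_imp_decreasing_open[OF assms(2)])
  fix x assume x: "a < x" "x < b"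
  have "ln (2 - x) > 0" using x assms by simp
  then have "- ln (2 - x) / x\<^sup>2 < 0" using x assms by (simp add: divide_neg_pos)
  then show "\<exists>y. (Lf has_real_derivative y) (at x) \<and> y < 0"
    using Lf_deriv[of x] x assms by auto
next
  show "continuous_on {a..b} Lf" using assms by (intro Lf_cont) auto
qed

lemma Lf_25: "Lf (2/5) > 0"
proof -
  have e: "Lf (2/5) = ln (1/5) / 2 + 2 * ln (8/5)" by (simp add: Lf_def)
  have "ln ((8/5::real)^4) = 4 * ln (8/5)" by (simp add: ln_realpow)
  moreover have "ln 5 < ln ((8/5::real)^4)"
  proof -
    have "(8/5::real)^4 = 4096/625" by (simp add: power_divide)
    then show ?thesis by simp
  qed
  moreover have "ln (1/5::real) = - ln 5" by (simp add: ln_div)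
  ultimately show ?thesis using e by linarith
qed

lemma Lf_1: "Lf 1 < 0"
  by (simp add: Lf_def)

lemma f_one_iff: "0 < p \<Longrightarrow> p \<le> 1 \<Longrightarrow> f p = 1 \<longleftrightarrow> Lf p = 0"
  by (simp add: f_exp)

lemma pstar_props: "2/5 < pstar" "pstar < 1" "Lf pstar = 0"
proof -
  obtain p0 where p0: "2/5 \<le> p0" "p0 \<le> 1" "Lf p0 = 0"
    using IVT2'[of Lf 1 0 "2/5"] Lf_1 Lf_25 Lf_cont[of "2/5" 1] by force
  have uniq: "q = p0" if "0 < q" "q \<le> 1" "Lf q = 0" for q
  proof (rule ccontr)
    assume "q \<noteq> p0"
    then consider "q < p0" | "p0 < q" by linarith
    then show False
    proof cases
      case 1 then show ?thesis using Lf_dec[of q p0] that p0 by auto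
    next
      case 2 then show ?thesis using Lf_dec[of p0 q] that p0 by auto
    qed
  qed
  have "pstar = p0"
    unfolding pstar_def
  proof (rule the_equality)
    show "0 < p0 \<and> p0 \<le> 1 \<and> f p0 = 1" using p0 f_one_iff[of p0] by auto
  next
    fix q assume "0 < q \<and> q \<le> 1 \<and> f q = 1"
    then show "q = p0" using uniq f_one_iff[of q] by auto
  qed
  then show "Lf pstar = 0" using p0 by simp
  show "2/5 < pstar" using \<open>pstar = p0\<close> p0 Lf_25 by (cases "p0 = 2/5") auto
  show "pstar < 1" using \<open>pstar = p0\<close> p0 Lf_1 by (cases "p0 = 1") auto
qed

lemma Lf_nonneg: "0 < p \<Longrightarrow> p \<le> pstar \<Longrightarrow> 0 \<le> Lf p"
  using Lf_dec[of p pstar] pstar_props by (cases "p = pstar") auto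

lemma Lf_neg: "pstar < p \<Longrightarrow> p \<le> 1 \<Longrightarrow> Lf p < 0"
  using Lf_dec[of pstar p] pstar_props by auto

lemma g_Lf:
  assumes "0 < p" "p < 1"
  shows "g p = exp (2 * Lf p) * 2 powr (1 - 2 / p)"
proof -
  have "exp (2 * Lf p) = (p / 2) * (2 - p) powr (2 / p - 1)"
  proof -
    have "2 * Lf p = ln (p / 2) + (2 / p - 1) * ln (2 - p)"
      by (simp add: Lf_def algebra_simps)
    then show ?thesis using assms by (simp add: exp_add powr_def)
  qed
  moreover have "(1 - p / 2) powr (2 / p - 1) = (2 - p) powr (2 / p - 1) * 2 powr (1 - 2 / p)"
  proof -
    have h: "(1 - p / 2) = (2 - p) / 2" by simp
    have "(1 - p / 2) powr (2 / p - 1) = (2 - p) powr (2 / p - 1) / 2 powr (2 / p - 1)"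
      by (subst h) (rule powr_divide)
    also have "1 / (2::real) powr (2 / p - 1) = 2 powr (1 - 2 / p)"
      by (simp add: powr_minus_divide[symmetric])
    then have "(2 - p) powr (2 / p - 1) / 2 powr (2 / p - 1) = (2 - p) powr (2 / p - 1) * 2 powr (1 - 2 / p)"
      by (metis times_divide_eq_right mult.right_neutral)
    finally show ?thesis .
  qed
  ultimately show ?thesis by (simp add: g_def)
qed

definition Msq :: "real \<Rightarrow> real" where
  "Msq p = (if p \<le> pstar then 2 * g p else 2 powr (2 - 2 / p))"

lemma two_powr_2: "(2::real) powr (2 - 2 / p) = 2 * 2 powr (1 - 2 / p)"
proof -
  have "(2::real) powr (2 - 2 / p) = 2 powr (1 + (1 - 2 / p))" by simp
  also have "\<dots> = 2 * 2 powr (1 - 2 / p)" by (simp only: powr_add) simp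
  finally show ?thesis .
qed

lemma Msq_ge_g: "0 < p \<Longrightarrow> p < 1 \<Longrightarrow> 2 * g p \<le> Msq p"
proof -
  assume p: "0 < p" "p < 1"
  show ?thesis
  proof (cases "p \<le> pstar")
    case True then show ?thesis by (simp add: Msq_def)
  next
    case False
    then have "Lf p < 0" using Lf_neg p by auto
    then have "exp (2 * Lf p) \<le> 1" by simp
    then have "g p \<le> 2 powr (1 - 2 / p)"
      using g_Lf[OF p] mult_right_mono[of "exp (2 * Lf p)" 1 "2 powr (1 - 2 / p)"] by simp
    then show ?thesis using False by (simp add: Msq_def two_powr_2)
  qed
qed

lemma Msq_ge_2: "0 < p \<Longrightarrow> p < 1 \<Longrightarrow> 2 powr (2 - 2 / p) \<le> Msq p"
proof -
  assume p: "0 < p" "p < 1"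
  show ?thesis
  proof (cases "p \<le> pstar")
    case False then show ?thesis by (simp add: Msq_def)
  next
    case True
    then have "Lf p \<ge> 0" using Lf_nonneg p by auto
    then have "exp (2 * Lf p) \<ge> 1" by simp
    then have "2 powr (1 - 2 / p) \<le> g p"
      using g_Lf[OF p] mult_right_mono[of 1 "exp (2 * Lf p)" "2 powr (1 - 2 / p)"] by simp
    then show ?thesis using True by (simp add: Msq_def two_powr_2)
  qed
qed

lemma Cp_Msq: "Cp d p = (((2 - d) powr (1 - 2 / p) * g p + d * Msq p) / (1 - d)) powr (p / 2)"
  by (simp add: Cp_def Msq_def algebra_simps)

definition Mb :: "real \<Rightarrow> real" where "Mb p = sqrt (Msq p)"

lemma Mb_ge_g: "0 < p \<Longrightarrow> p < 1 \<Longrightarrow> sqrt (2 * g p) \<le> Mb p"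
  unfolding Mb_def using Msq_ge_g by simp

lemma Mb_ge_2: "0 < p \<Longrightarrow> p < 1 \<Longrightarrow> 2 powr (1 - 1 / p) \<le> Mb p"
proof -
  assume p: "0 < p" "p < 1"
  have "2 powr (1 - 1 / p) = sqrt ((2::real) powr (2 - 2 / p))"
  proof -
    have "(2::real) powr (2 - 2 / p) = (2 powr (1 - 1 / p))\<^sup>2"
      by (simp add: powr_sq algebra_simps)
    then show ?thesis by simp
  qed
  then show ?thesis unfolding Mb_def using Msq_ge_2[OF p] by simp
qed


lemma Mb_nonneg: "0 < p \<Longrightarrow> p < 1 \<Longrightarrow> 0 \<le> Mb p"
  using Mb_ge_2[of p] by (metis order.trans powr_ge_zero)

lemma powr_1_split: "0 \<le> v \<Longrightarrow> v powr a * v = v powr (a + 1)" for v a :: real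
  by (cases "v = 0") (simp_all add: powr_add)

lemma H1:
  fixes p x y :: real
  assumes p: "0 < p" "p < 1" and xy: "0 \<le> y" "y \<le> x" "x + y \<le> 1"
  shows "x powr (1/p - 1/2) * y powr (1/2) + y powr (1/p - 1) * (1 - x) \<le> Mb p"
proof (cases "x \<le> 1/2")
  case True
  have e0: "1/p - 1 \<ge> 0" using p by (simp add: field_simps)
  have t1: "x powr (1/p - 1/2) * y powr (1/2) \<le> x powr (1/p - 1/2) * x powr (1/2)"
    using xy by (intro mult_left_mono powr_mono2) auto
  have t1': "x powr (1/p - 1/2) * x powr (1/2) = x powr (1/p - 1) * x"
  proof -
    have "x powr (1/p - 1/2) * x powr (1/2) = x powr (1/p)" by (simp flip: powr_add)
    also have "\<dots> = x powr (1/p - 1) * x" using powr_1_split[of x "1/p - 1"] xy by simp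
    finally show ?thesis .
  qed
  have t2: "y powr (1/p - 1) * (1 - x) \<le> x powr (1/p - 1) * (1 - x)"
    using xy True e0 by (intro mult_right_mono powr_mono2) auto
  have "x powr (1/p - 1/2) * y powr (1/2) + y powr (1/p - 1) * (1 - x) \<le> x powr (1/p - 1) * x + x powr (1/p - 1) * (1 - x)"
    using t1 t1' t2 by linarith
  also have "\<dots> = x powr (1/p - 1)" by (simp add: algebra_simps)
  also have "\<dots> \<le> (1/2) powr (1/p - 1)"
    using xy True e0 by (intro powr_mono2) auto
  also have "(1/2::real) powr (1/p - 1) = 2 powr (1 - 1/p)"
    by (simp add: powr_divide powr_minus_divide[symmetric])
  also have "\<dots> \<le> Mb p" using Mb_ge_2 p by simp
  finally show ?thesis .
next
  case False
  define s where "s = 1 - x"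
  have s: "0 \<le> s" "s \<le> 1/2" "y \<le> s" using False xy by (auto simp: s_def)
  have e0: "1/p - 1 \<ge> 0" using p by (simp add: field_simps)
  have t1: "x powr (1/p - 1/2) * y powr (1/2) \<le> (1 - s) powr (1/p - 1/2) * s powr (1/2)"
  proof -
    have "x powr (1/p - 1/2) * y powr (1/2) \<le> x powr (1/p - 1/2) * s powr (1/2)"
      using s xy by (intro mult_left_mono powr_mono2) auto
    moreover have "x = 1 - s" by (simp add: s_def)
    ultimately show ?thesis by simp
  qed
  have t2: "y powr (1/p - 1) * (1 - x) \<le> s powr (1/p)"
  proof -
    have "y powr (1/p - 1) * s \<le> s powr (1/p - 1) * s"
      using s e0 xy by (intro mult_right_mono powr_mono2) auto
    also have "\<dots> = s powr (1/p)" using powr_1_split[of s "1/p - 1"] s by simp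
    finally show ?thesis by (simp add: s_def)
  qed
  have "x powr (1/p - 1/2) * y powr (1/2) + y powr (1/p - 1) * (1 - x)
      \<le> (1 - s) powr (1/p - 1/2) * s powr (1/2) + s powr (1/p)"
    using t1 t2 by linarith
  also have "\<dots> \<le> Mb p"
  proof (cases "p \<le> 2/5")
    case True
    then show ?thesis using phiA[of p s] s p Mb_ge_g[OF p] by linarith
  next
    case False
    then show ?thesis using phiB[of p s] s p Mb_ge_2[OF p] by linarith
  qed
  finally show ?thesis .
qed

lemma H:
  fixes p x y Q :: real
  assumes p: "0 < p" "p < 1" and xy: "0 \<le> y" "y \<le> x" "x + y \<le> Q"
  shows "x powr (1/p - 1/2) * y powr (1/2) + y powr (1/p - 1) * (Q - x) \<le> Mb p * Q powr (1/p)"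
proof (cases "Q = 0")
  case True
  then have "x = 0" "y = 0" using xy by auto
  then show ?thesis using True by simp
next
  case False
  then have Q: "Q > 0" using xy by auto
  define x' where "x' = x / Q"
  define y' where "y' = y / Q"
  have xe: "x = Q * x'" and ye: "y = Q * y'" using Q by (auto simp: x'_def y'_def)
  have xy': "0 \<le> y'" "y' \<le> x'" "x' + y' \<le> 1"
    using xy Q by (auto simp: x'_def y'_def divide_right_mono add_divide_distrib[symmetric])
  have "x powr (1/p - 1/2) * y powr (1/2) = Q powr (1/p) * (x' powr (1/p - 1/2) * y' powr (1/2))"
  proof -
    have "x powr (1/p - 1/2) * y powr (1/2) = (Q powr (1/p - 1/2) * Q powr (1/2)) * (x' powr (1/p - 1/2) * y' powr (1/2))"
      unfolding xe ye by (simp add: powr_mult algebra_simps)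
    also have "Q powr (1/p - 1/2) * Q powr (1/2) = Q powr (1/p)" by (simp flip: powr_add)
    finally show ?thesis .
  qed
  moreover have "y powr (1/p - 1) * (Q - x) = Q powr (1/p) * (y' powr (1/p - 1) * (1 - x'))"
  proof -
    have "y powr (1/p - 1) * (Q - x) = (Q powr (1/p - 1) * Q) * (y' powr (1/p - 1) * (1 - x'))"
      unfolding xe ye by (simp add: powr_mult algebra_simps)
    also have "Q powr (1/p - 1) * Q = Q powr (1/p)" using powr_1_split[of Q "1/p - 1"] Q by simp
    finally show ?thesis .
  qed
  ultimately have "x powr (1/p - 1/2) * y powr (1/2) + y powr (1/p - 1) * (Q - x)
     = Q powr (1/p) * (x' powr (1/p - 1/2) * y' powr (1/2) + y' powr (1/p - 1) * (1 - x'))"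
    by (simp add: algebra_simps)
  also have "\<dots> \<le> Q powr (1/p) * Mb p"
    using H1[OF p xy'] by (intro mult_left_mono) auto
  finally show ?thesis by (simp add: mult.commute)
qed

lemma SL:
  fixes p :: real and P :: "nat \<Rightarrow> real"
  assumes p: "0 < p" "p < 1"
    and nn: "\<And>j. j < l \<Longrightarrow> 0 \<le> P j"
    and dec: "\<And>j. 1 \<le> j \<Longrightarrow> j < l \<Longrightarrow> P j \<le> P (j - 1)"
  shows "(\<Sum>j\<in>{1..<l}. P (j - 1) powr (1/p - 1/2) * P j powr (1/2)) \<le> Mb p * (\<Sum>j<l. P j) powr (1/p)"
proof (cases "l \<le> 1")
  case True
  then have "{1..<l} = {}" by auto
  then show ?thesis using Mb_nonneg[OF p] by simp
next
  case False
  then have l2: "2 \<le> l" by simp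
  define Q where "Q = (\<Sum>j<l. P j)"
  have le1: "P j \<le> P 1" if "1 \<le> j" "j < l" for j
    using that
  proof (induction j)
    case 0 then show ?case by simp
  next
    case (Suc j)
    show ?case
    proof (cases "j = 0")
      case True then show ?thesis by simp
    next
      case False
      then have "P (Suc j) \<le> P j" using dec[of "Suc j"] Suc.prems by simp
      also have "P j \<le> P 1" using Suc.IH Suc.prems False by simp
      finally show ?thesis .
    qed
  qed
  have e0: "1/p - 1 \<ge> 0" using p by (simp add: field_simps)
  have split: "(\<Sum>j\<in>{1..<l}. P (j - 1) powr (1/p - 1/2) * P j powr (1/2))
      = P 0 powr (1/p - 1/2) * P 1 powr (1/2) + (\<Sum>j\<in>{2..<l}. P (j - 1) powr (1/p - 1/2) * P j powr (1/2))"
    using l2 by (subst sum.atLeast_Suc_lessThan) (auto simp: numeral_2_eq_2)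
  have tail: "(\<Sum>j\<in>{2..<l}. P (j - 1) powr (1/p - 1/2) * P j powr (1/2)) \<le> (\<Sum>j\<in>{2..<l}. P 1 powr (1/p - 1) * P (j - 1))"
  proof (rule sum_mono)
    fix j assume j: "j \<in> {2..<l}"
    have pj: "0 \<le> P j" "P j \<le> P (j - 1)" "0 \<le> P (j - 1)" "P (j - 1) \<le> P 1"
      using j nn dec le1[of "j - 1"] by auto
    have "P (j - 1) powr (1/p - 1/2) * P j powr (1/2) \<le> P (j - 1) powr (1/p - 1/2) * P (j - 1) powr (1/2)"
      using pj by (intro mult_left_mono powr_mono2) auto
    also have "\<dots> = P (j - 1) powr (1/p - 1) * P (j - 1)"
    proof -
      have "P (j - 1) powr (1/p - 1/2) * P (j - 1) powr (1/2) = P (j - 1) powr (1/p)" by (simp flip: powr_add)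
      also have "\<dots> = P (j - 1) powr (1/p - 1) * P (j - 1)" using powr_1_split[of "P (j - 1)" "1/p - 1"] pj by simp
      finally show ?thesis .
    qed
    also have "\<dots> \<le> P 1 powr (1/p - 1) * P (j - 1)"
      using pj e0 by (intro mult_right_mono powr_mono2) auto
    finally show "P (j - 1) powr (1/p - 1/2) * P j powr (1/2) \<le> P 1 powr (1/p - 1) * P (j - 1)" .
  qed
  have s1: "(\<Sum>j\<in>{2..<l}. P (j - 1)) = (\<Sum>i\<in>{1..<l - 1}. P i)"
    using sum.shift_bounds_nat_ivl[of "\<lambda>j. P (j - 1)" 1 1 "l - 1"] l2 by (simp add: numeral_2_eq_2)
  have s2: "(\<Sum>i\<in>{1..<l - 1}. P i) \<le> (\<Sum>i\<in>{1..<l}. P i)"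
    using nn by (intro sum_mono2) auto
  have Qs: "Q = P 0 + (\<Sum>i\<in>{1..<l}. P i)"
    unfolding Q_def using l2 by (simp add: lessThan_atLeast0 sum.atLeast_Suc_lessThan)
  have "(\<Sum>j\<in>{2..<l}. P 1 powr (1/p - 1) * P (j - 1)) \<le> P 1 powr (1/p - 1) * (Q - P 0)"
    using s1 s2 Qs by (simp add: sum_distrib_left[symmetric] mult_left_mono)
  moreover have "P 1 \<le> P 0" using dec[of 1] l2 by simp
  moreover have "P 0 + P 1 \<le> Q"
  proof -
    have "P 1 \<le> (\<Sum>i\<in>{1..<l}. P i)" using nn l2 by (intro member_le_sum) auto
    then show ?thesis using Qs by simp
  qed
  moreover have "0 \<le> P 1" using nn l2 by simp
  ultimately have "P 0 powr (1/p - 1/2) * P 1 powr (1/2) + (\<Sum>j\<in>{2..<l}. P (j - 1) powr (1/p - 1/2) * P j powr (1/2)) \<le> Mb p * Q powr (1/p)"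
    using H[OF p, of "P 1" "P 0" Q] tail by linarith
  then show ?thesis using split by (simp add: Q_def)
qed


definition ip :: "nat \<Rightarrow> (nat \<Rightarrow> real) \<Rightarrow> (nat \<Rightarrow> real) \<Rightarrow> real" where
  "ip m u v = (\<Sum>i<m. u i * v i)"

definition rs :: "nat set \<Rightarrow> (nat \<Rightarrow> real) \<Rightarrow> nat \<Rightarrow> real" where
  "rs S z = (\<lambda>j. if j \<in> S then z j else 0)"

lemma norm2_L2: "norm2 m z = L2_set z {..<m}"
  by (simp add: norm2_def sqnorm_def L2_set_def)

lemma sqnorm_nonneg: "0 \<le> sqnorm n z"
  by (simp add: sqnorm_def sum_nonneg)

lemma sqnorm_zero: "sqnorm n z = 0 \<Longrightarrow> j < n \<Longrightarrow> z j = 0"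
  unfolding sqnorm_def by (simp add: sum_nonneg_eq_0_iff)

lemma matvec_cong: "(\<And>j. j < n \<Longrightarrow> u j = v j) \<Longrightarrow> matvec A n u = matvec A n v"
  unfolding matvec_def by (intro ext sum.cong) auto

lemma matvec_zero: "(\<And>j. j < n \<Longrightarrow> u j = 0) \<Longrightarrow> matvec A n u i = 0"
  unfolding matvec_def by simp

lemma matvec_lin: "matvec A n (\<lambda>j. a * u j + b * v j) i = a * matvec A n u i + b * matvec A n v i"
  by (simp add: matvec_def sum.distrib sum_distrib_left algebra_simps)

lemma matvec_add: "matvec A n (\<lambda>j. u j + v j) i = matvec A n u i + matvec A n v i"
  by (simp add: matvec_def sum.distrib algebra_simps)

lemma matvec_diff: "matvec A n (\<lambda>j. u j - v j) i = matvec A n u i - matvec A n v i"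
  by (simp add: matvec_def sum_subtractf algebra_simps)

lemma matvec_sum: "matvec A n (\<lambda>t. \<Sum>j\<in>J. F j t) i = (\<Sum>j\<in>J. matvec A n (F j) i)"
  unfolding matvec_def by (simp add: sum_distrib_left sum.swap[of _ J])

lemma sqnorm_lin: "sqnorm m (\<lambda>i. a * U i + b * V i) = a\<^sup>2 * sqnorm m U + 2 * a * b * ip m U V + b\<^sup>2 * sqnorm m V"
  by (simp add: sqnorm_def ip_def power2_eq_square sum.distrib sum_distrib_left algebra_simps)

lemma ip_self: "ip m U U = sqnorm m U"
  by (simp add: ip_def sqnorm_def power2_eq_square)

lemma sqnorm_sum_expand:
  "sqnorm m (\<lambda>i. \<Sum>j\<in>J. F j i) = (\<Sum>j\<in>J. \<Sum>j'\<in>J. ip m (F j) (F j'))"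
proof -
  have "sqnorm m (\<lambda>i. \<Sum>j\<in>J. F j i) = (\<Sum>i<m. \<Sum>j\<in>J. \<Sum>j'\<in>J. F j i * F j' i)"
    unfolding sqnorm_def by (simp add: power2_eq_square sum_product)
  also have "\<dots> = (\<Sum>j\<in>J. \<Sum>i<m. \<Sum>j'\<in>J. F j i * F j' i)" by (rule sum.swap)
  also have "\<dots> = (\<Sum>j\<in>J. \<Sum>j'\<in>J. \<Sum>i<m. F j i * F j' i)" by (simp add: sum.swap[of _ "{..<m}"])
  finally show ?thesis by (simp add: ip_def)
qed

lemma ric_prop:
  assumes "0 < s" "0 < n" "sparse s n z"
  shows "(1 - ric A m n s) * sqnorm n z \<le> sqnorm m (matvec A n z) \<and> sqnorm m (matvec A n z) \<le> (1 + ric A m n s) * sqnorm n z"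
proof -
  define D where "D = {d. \<forall>z. sparse s n z \<longrightarrow>
      (1 - d) * sqnorm n z \<le> sqnorm m (matvec A n z) \<and>
      sqnorm m (matvec A n z) \<le> (1 + d) * sqnorm n z}"
  have ricD: "ric A m n s = Inf D" by (simp add: ric_def D_def)
  define d0 where "d0 = 1 + (\<Sum>i<m. \<Sum>j<n. (A i j)\<^sup>2)"
  have d0: "d0 \<in> D"
  proof -
    have "sqnorm m (matvec A n z) \<le> (d0 - 1) * sqnorm n z" for z
    proof -
      have "sqnorm m (matvec A n z) = (\<Sum>i<m. (\<Sum>j<n. A i j * z j)\<^sup>2)"
        by (simp add: sqnorm_def matvec_def)
      also have "\<dots> \<le> (\<Sum>i<m. (\<Sum>j<n. (A i j)\<^sup>2) * (\<Sum>j<n. (z j)\<^sup>2))"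
        by (intro sum_mono Cauchy_Schwarz_ineq_sum)
      also have "\<dots> = (d0 - 1) * sqnorm n z"
        by (simp add: d0_def sqnorm_def sum_distrib_right)
      finally show ?thesis .
    qed
    moreover have "0 \<le> (\<Sum>i<m. \<Sum>j<n. (A i j)\<^sup>2)" by (intro sum_nonneg) auto
    ultimately show ?thesis
    proof -
      assume q: "\<And>z. sqnorm m (matvec A n z) \<le> (d0 - 1) * sqnorm n z"
        and C: "0 \<le> (\<Sum>i<m. \<Sum>j<n. (A i j)\<^sup>2)"
      have "(1 - d0) * sqnorm n z \<le> sqnorm m (matvec A n z) \<and> sqnorm m (matvec A n z) \<le> (1 + d0) * sqnorm n z" for z
      proof -
        have C': "d0 - 1 \<ge> 0" using C by (simp add: d0_def)
        have S: "0 \<le> sqnorm n z" "0 \<le> sqnorm m (matvec A n z)" by (rule sqnorm_nonneg)+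
        have "0 \<le> (d0 - 1) * sqnorm n z" using C' S by simp
        then show ?thesis using q[of z] S by (simp add: algebra_simps)
      qed
      then show ?thesis by (simp add: D_def)
    qed
  qed
  define S where "S = sqnorm n z"
  define q where "q = sqnorm m (matvec A n z)"
  show ?thesis
  proof (cases "S = 0")
    case True
    then have "\<And>j. j < n \<Longrightarrow> z j = 0" using sqnorm_zero[of n z] S_def by simp
    then have "q = 0" unfolding q_def sqnorm_def using matvec_zero[of n z A] by simp
    then show ?thesis using True by (simp add: S_def q_def)
  next
    case False
    then have S: "S > 0" using sqnorm_nonneg[of n z] S_def by linarith
    have "\<forall>d\<in>D. 1 - q / S \<le> d \<and> q / S - 1 \<le> d"
    proof
      fix d assume "d \<in> D"
      then have "(1 - d) * S \<le> q" "q \<le> (1 + d) * S" using assms(3) by (auto simp: D_def S_def q_def)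
      then show "1 - q / S \<le> d \<and> q / S - 1 \<le> d" using S by (auto simp: field_simps)
    qed
    then have "1 - q / S \<le> Inf D" "q / S - 1 \<le> Inf D"
      using d0 by (auto intro!: cInf_greatest)
    then have "(1 - Inf D) * S \<le> q" "q \<le> (1 + Inf D) * S" using S by (auto simp: field_simps)
    then show ?thesis by (simp add: ricD S_def q_def)
  qed
qed

definition ripP :: "(nat \<Rightarrow> nat \<Rightarrow> real) \<Rightarrow> nat \<Rightarrow> nat \<Rightarrow> nat \<Rightarrow> real \<Rightarrow> bool" where
  "ripP A m n s d \<longleftrightarrow> (\<forall>z. sparse s n z \<longrightarrow> (1 - d) * sqnorm n z \<le> sqnorm m (matvec A n z) \<and> sqnorm m (matvec A n z) \<le> (1 + d) * sqnorm n z)"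

lemma sparse_support:
  assumes "U \<subseteq> {..<n}" "card U \<le> s" "\<And>j. j < n \<Longrightarrow> j \<notin> U \<Longrightarrow> z j = 0"
  shows "sparse s n z"
proof -
  have "{j. j < n \<and> z j \<noteq> 0} \<subseteq> U" using assms by auto
  then have "card {j. j < n \<and> z j \<noteq> 0} \<le> card U"
    using assms(1) by (intro card_mono) (auto intro: finite_subset)
  then show ?thesis using assms by (simp add: sparse_def)
qed

lemma ip_bound:
  assumes rip: "ripP A m n (2 * k) d" and d: "0 \<le> d"
    and UV: "U \<subseteq> {..<n}" "V \<subseteq> {..<n}" "U \<inter> V = {}" "card U \<le> k" "card V \<le> k"
    and u0: "\<And>j. j < n \<Longrightarrow> j \<notin> U \<Longrightarrow> u j = 0"
    and v0: "\<And>j. j < n \<Longrightarrow> j \<notin> V \<Longrightarrow> v j = 0"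
  shows "\<bar>ip m (matvec A n u) (matvec A n v)\<bar> \<le> d * sqrt (sqnorm n u) * sqrt (sqnorm n v)"
proof -
  define Su where "Su = sqnorm n u"
  define Sv where "Sv = sqnorm n v"
  define Au where "Au = matvec A n u"
  define Av where "Av = matvec A n v"
  show ?thesis
  proof (cases "Su = 0 \<or> Sv = 0")
    case True
    then have "Au = (\<lambda>i. 0) \<or> Av = (\<lambda>i. 0)"
      using sqnorm_zero matvec_zero unfolding Su_def Sv_def Au_def Av_def by blast
    then show ?thesis using d sqnorm_nonneg[of n u] sqnorm_nonneg[of n v] by (auto simp: ip_def Au_def Av_def)
  next
    case False
    then have pos: "Su > 0" "Sv > 0" using sqnorm_nonneg unfolding Su_def Sv_def by (metis less_eq_real_def)+
    define a where "a = sqrt Sv / sqrt Su"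
    have a: "a > 0" using pos by (simp add: a_def)
    have a2: "a\<^sup>2 * Su = Sv" using pos by (simp add: a_def power_divide)
    have uv: "u j * v j = 0" if "j < n" for j
    proof (cases "j \<in> U")
      case True
      then have "j \<notin> V" using UV(3) by blast
      then show ?thesis using v0 that by simp
    next
      case False
      then show ?thesis using u0 that by simp
    qed
    have key: "(1 - d) * (a\<^sup>2 * Su + Sv) \<le> a\<^sup>2 * sqnorm m Au + 2 * a * b * ip m Au Av + b\<^sup>2 * sqnorm m Av
             \<and> a\<^sup>2 * sqnorm m Au + 2 * a * b * ip m Au Av + b\<^sup>2 * sqnorm m Av \<le> (1 + d) * (a\<^sup>2 * Su + Sv)"
      if b: "b = 1 \<or> b = -1" for b
    proof -
      define z where "z = (\<lambda>j. a * u j + b * v j)"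
      have sp: "sparse (2 * k) n z"
      proof (rule sparse_support[of "U \<union> V"])
        show "U \<union> V \<subseteq> {..<n}" using UV by auto
        have "card (U \<union> V) \<le> card U + card V" by (rule card_Un_le)
        then show "card (U \<union> V) \<le> 2 * k" using UV by linarith
        show "\<And>j. j < n \<Longrightarrow> j \<notin> U \<union> V \<Longrightarrow> z j = 0" using u0 v0 by (simp add: z_def)
      qed
      have sz: "sqnorm n z = a\<^sup>2 * Su + Sv"
      proof -
        have "sqnorm n z = a\<^sup>2 * Su + 2 * a * b * (\<Sum>j<n. u j * v j) + b\<^sup>2 * Sv"
          unfolding z_def Su_def Sv_def sqnorm_def
          by (simp add: power2_eq_square sum.distrib sum_distrib_left algebra_simps)
        also have "(\<Sum>j<n. u j * v j) = 0" using uv by (intro sum.neutral) simp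
        finally show ?thesis using b by auto
      qed
      have az: "sqnorm m (matvec A n z) = a\<^sup>2 * sqnorm m Au + 2 * a * b * ip m Au Av + b\<^sup>2 * sqnorm m Av"
        unfolding z_def Au_def Av_def by (subst matvec_lin[abs_def]) (rule sqnorm_lin)
      show ?thesis using rip sp unfolding ripP_def by (metis sz az)
    qed
    have b2: "(-1::real)\<^sup>2 = 1" by simp
    have k1: "(1 - d) * (a\<^sup>2 * Su + Sv) \<le> a\<^sup>2 * sqnorm m Au + 2 * a * ip m Au Av + sqnorm m Av"
         "a\<^sup>2 * sqnorm m Au + 2 * a * ip m Au Av + sqnorm m Av \<le> (1 + d) * (a\<^sup>2 * Su + Sv)"
      using key[of 1] by simp_all
    have k2: "(1 - d) * (a\<^sup>2 * Su + Sv) \<le> a\<^sup>2 * sqnorm m Au - 2 * a * ip m Au Av + sqnorm m Av"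
         "a\<^sup>2 * sqnorm m Au - 2 * a * ip m Au Av + sqnorm m Av \<le> (1 + d) * (a\<^sup>2 * Su + Sv)"
      using key[of "-1"] by simp_all
    have "4 * a * \<bar>ip m Au Av\<bar> \<le> 2 * d * (a\<^sup>2 * Su + Sv)"
      using k1 k2 a by (cases "ip m Au Av \<ge> 0") (auto simp: algebra_simps)
    then have "a * \<bar>ip m Au Av\<bar> \<le> d * Sv" using a2 by simp
    then have "sqrt Sv * \<bar>ip m Au Av\<bar> \<le> d * Sv * sqrt Su"
      using pos by (simp add: a_def field_simps)
    also have "d * Sv * sqrt Su = sqrt Sv * (d * sqrt Su * sqrt Sv)"
    proof -
      have e: "sqrt Sv * sqrt Sv = Sv" using pos by simp
      have "sqrt Sv * (d * sqrt Su * sqrt Sv) = d * (sqrt Sv * sqrt Sv) * sqrt Su" by (simp only: mult_ac)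
      then show ?thesis using e by simp
    qed
    finally have "\<bar>ip m Au Av\<bar> \<le> d * sqrt Su * sqrt Sv"
      using pos by (simp add: mult_le_cancel_left_pos)
    then show ?thesis by (simp add: Su_def Sv_def Au_def Av_def)
  qed
qed


lemma sort_perm:
  fixes h :: "nat \<Rightarrow> real"
  assumes "finite R" "card R = N"
  shows "\<exists>\<sigma>. bij_betw \<sigma> {..<N} R \<and> (\<forall>i j. i \<le> j \<longrightarrow> j < N \<longrightarrow> \<bar>h (\<sigma> j)\<bar> \<le> \<bar>h (\<sigma> i)\<bar>)"
proof -
  define xs where "xs = sort_key (\<lambda>j. - \<bar>h j\<bar>) (sorted_list_of_set R)"
  have d: "distinct xs" and s: "set xs = R" and len: "length xs = N"
    using assms by (auto simp: xs_def)
  have b: "bij_betw ((!) xs) {..<N} R" using d s len by (intro bij_betw_nth) auto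
  have so: "sorted (map (\<lambda>j. - \<bar>h j\<bar>) xs)" by (simp add: xs_def)
  have "\<bar>h (xs ! j)\<bar> \<le> \<bar>h (xs ! i)\<bar>" if "i \<le> j" "j < N" for i j
  proof -
    have "map (\<lambda>j. - \<bar>h j\<bar>) xs ! i \<le> map (\<lambda>j. - \<bar>h j\<bar>) xs ! j"
      using sorted_nth_mono[OF so, of i j] that len by simp
    then show ?thesis using that len by simp
  qed
  then show ?thesis using b by blast
qed

lemma sum_blocks:
  fixes G :: "nat \<Rightarrow> 'a::comm_monoid_add"
  shows "(\<Sum>t<l * k. G t) = (\<Sum>j<l. \<Sum>i<k. G (j * k + i))"
proof -
  have "(\<Sum>t<l * k. G t) = (\<Sum>j<l. sum G {j * k..<j * k + k})"
    by (rule sum.nat_group[symmetric])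
  also have "\<dots> = (\<Sum>j<l. \<Sum>i<k. G (j * k + i))"
  proof (rule sum.cong[OF refl])
    fix j
    have "sum G {0 + j * k..<k + j * k} = (\<Sum>i\<in>{0..<k}. G (i + j * k))"
      by (rule sum.shift_bounds_nat_ivl)
    then show "sum G {j * k..<j * k + k} = (\<Sum>i<k. G (j * k + i))"
      by (simp add: add.commute lessThan_atLeast0)
  qed
  finally show ?thesis .
qed

lemma blk:
  fixes z :: "nat \<Rightarrow> real"
  assumes p: "0 < p" "p < 1" and c: "0 \<le> c" and zb: "\<And>i. i \<in> S \<Longrightarrow> \<bar>z i\<bar> powr p \<le> c"
  shows "(\<Sum>i\<in>S. (z i)\<^sup>2) \<le> c powr (2 / p - 1) * (\<Sum>i\<in>S. \<bar>z i\<bar> powr p)"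
proof -
  have "(z i)\<^sup>2 \<le> c powr (2 / p - 1) * \<bar>z i\<bar> powr p" if "i \<in> S" for i
  proof (cases "z i = 0")
    case True then show ?thesis by simp
  next
    case False
    have e: "(z i)\<^sup>2 = \<bar>z i\<bar> powr p * \<bar>z i\<bar> powr (2 - p)"
    proof -
      have "\<bar>z i\<bar> powr p * \<bar>z i\<bar> powr (2 - p) = \<bar>z i\<bar> powr 2" by (simp flip: powr_add)
      then show ?thesis by simp
    qed
    have "\<bar>z i\<bar> powr (2 - p) = (\<bar>z i\<bar> powr p) powr (2 / p - 1)"
    proof -
      have "p * (2 / p - 1) = 2 - p" using p by (simp add: field_simps)
      then show ?thesis by (simp add: powr_powr)
    qed
    also have "\<dots> \<le> c powr (2 / p - 1)"
    proof (rule powr_mono2)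
      show "0 \<le> 2 / p - 1" using p by (simp add: field_simps)
    qed (use zb that in auto)
    finally have "\<bar>z i\<bar> powr p * \<bar>z i\<bar> powr (2 - p) \<le> \<bar>z i\<bar> powr p * c powr (2 / p - 1)"
      by (intro mult_left_mono) auto
    then show ?thesis using e by (simp add: mult.commute)
  qed
  then have "(\<Sum>i\<in>S. (z i)\<^sup>2) \<le> (\<Sum>i\<in>S. c powr (2 / p - 1) * \<bar>z i\<bar> powr p)"
    by (intro sum_mono) auto
  also have "\<dots> = c powr (2 / p - 1) * (\<Sum>i\<in>S. \<bar>z i\<bar> powr p)" by (simp add: sum_distrib_left)
  finally show ?thesis .
qed

lemma avg_bound:
  fixes w :: "nat \<Rightarrow> real"
  assumes "0 < p" "finite S'" "card S' = k" "k > 0" "\<And>j. j \<in> S' \<Longrightarrow> a \<le> \<bar>w j\<bar>" "0 \<le> a"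
  shows "a powr p \<le> (\<Sum>j\<in>S'. \<bar>w j\<bar> powr p) / k"
proof -
  have "(\<Sum>j\<in>S'. a powr p) \<le> (\<Sum>j\<in>S'. \<bar>w j\<bar> powr p)"
    using assms by (intro sum_mono powr_mono2) auto
  then have "k * a powr p \<le> (\<Sum>j\<in>S'. \<bar>w j\<bar> powr p)" using assms by simp
  then show ?thesis using assms by (simp add: field_simps)
qed


lemma fin_i:
  fixes k P0 Q W a1 d p :: real
  assumes p: "0 < p" "p < 1" and k: "k > 0" and d: "0 < d" "d < 1"
    and P: "0 \<le> P0" "P0 \<le> Q"
    and H4: "W \<le> (P0 / k) powr (2/p - 1) * (Q - P0)"
    and H5: "k powr (1 - 2/p) * P0 powr (2/p) \<le> a1"
  shows "W - (1 - d) * a1 \<le> (2 - d) powr (1 - 2/p) * g p * (k powr (1 - 2/p) * Q powr (2/p))"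
proof -
  define a where "a = 2/p - 1"
  have a: "a > 1" using p by (simp add: a_def field_simps)
  have e1: "1 - 2/p = - a" by (simp add: a_def)
  have e2: "2/p = a + 1" by (simp add: a_def)
  have gpos: "0 \<le> g p" using p by (simp add: g_def)
  have kk: "(P0 / k) powr a = k powr (- a) * P0 powr a"
    by (simp only: powr_divide powr_minus) (simp add: divide_inverse mult.commute)
  have pp: "P0 powr (a + 1) = P0 powr a * P0" using powr_1_split[of P0 a] P by simp
  have "W - (1 - d) * a1 \<le> (P0 / k) powr a * (Q - P0) - (1 - d) * (k powr (- a) * P0 powr (a + 1))"
    using H4 H5 d unfolding e1 e2 a_def[symmetric] by (smt (verit) mult_left_mono)
  also have "\<dots> = k powr (- a) * (P0 powr a * (Q - (2 - d) * P0))"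
    unfolding kk pp by (simp add: algebra_simps)
  also have "\<dots> \<le> (2 - d) powr (- a) * g p * (k powr (- a) * Q powr (a + 1))"
  proof (cases "Q - (2 - d) * P0 \<le> 0")
    case True
    have "P0 powr a * (Q - (2 - d) * P0) \<le> 0" using True by (simp add: mult_nonneg_nonpos)
    then have "k powr (- a) * (P0 powr a * (Q - (2 - d) * P0)) \<le> 0" by (simp add: mult_nonneg_nonpos)
    also have "0 \<le> (2 - d) powr (- a) * g p * (k powr (- a) * Q powr (a + 1))" using gpos by simp
    finally show ?thesis .
  next
    case False
    then have Q: "Q > 0" using P d by (smt (verit) mult_nonneg_nonneg)
    define t where "t = (2 - d) * P0 / Q"
    have t0: "0 \<le> (2 - d) * P0" using P d by simp
    have t1: "(2 - d) * P0 < Q" using False by simp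
    have t: "0 \<le> t" "t < 1" using t0 t1 Q by (auto simp: t_def field_simps)
    have P0e: "P0 = t * Q / (2 - d)" using d Q by (simp add: t_def field_simps)
    have pa: "P0 powr a = t powr a * Q powr a * (2 - d) powr (- a)"
      by (simp only: P0e powr_divide powr_mult powr_minus) (simp add: divide_inverse)
    have qd: "Q - (2 - d) * P0 = Q * (1 - t)" using d by (simp add: P0e field_simps)
    have "P0 powr a * (Q - (2 - d) * P0) = (t powr a * Q powr a * (2 - d) powr (- a)) * (Q * (1 - t))"
      by (simp only: pa qd)
    also have "\<dots> = (2 - d) powr (- a) * (Q powr a * Q) * ((1 - t) * (1 - (1 - t)) powr a)"
      by (simp add: algebra_simps)
    also have "Q powr a * Q = Q powr (a + 1)" using powr_1_split[of Q a] Q by simp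
    also have "(1 - t) * (1 - (1 - t)) powr a \<le> g p"
      using g_max[of p "1 - t"] p t by (simp add: a_def)
    finally have "P0 powr a * (Q - (2 - d) * P0) \<le> (2 - d) powr (- a) * Q powr (a + 1) * g p"
      using d by (simp add: mult_left_mono)
    then have "k powr (- a) * (P0 powr a * (Q - (2 - d) * P0)) \<le> k powr (- a) * ((2 - d) powr (- a) * Q powr (a + 1) * g p)"
      by (rule mult_left_mono) simp
    then show ?thesis by (simp only: mult_ac)
  qed
  finally have X: "W - (1 - d) * a1 \<le> (2 - d) powr (- a) * g p * (k powr (- a) * Q powr (a + 1))" .
  have e3: "1 - (a + 1) = - a" by simp
  show ?thesis unfolding e2 e3 using X .
qed

lemma fin_ii:
  fixes k P0 Q W p :: real
  assumes p: "0 < p" "p < 1" and k: "k > 0"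
    and P: "0 \<le> P0" "P0 \<le> Q"
    and H4: "W \<le> (P0 / k) powr (2/p - 1) * (Q - P0)"
  shows "W \<le> g p * (k powr (1 - 2/p) * Q powr (2/p))"
proof -
  define a where "a = 2/p - 1"
  have e2: "2/p = a + 1" by (simp add: a_def)
  have e3: "1 - (a + 1) = - a" by simp
  have gpos: "0 \<le> g p" using p by (simp add: g_def)
  have kk: "(P0 / k) powr a = k powr (- a) * P0 powr a"
    by (simp only: powr_divide powr_minus) (simp add: divide_inverse mult.commute)
  have "P0 powr a * (Q - P0) \<le> g p * Q powr (a + 1)"
  proof (cases "Q = 0")
    case True then have "P0 = 0" using P by simp
    then show ?thesis using True by simp
  next
    case False
    then have Q: "Q > 0" using P by simp
    define t where "t = P0 / Q"
    have t: "0 \<le> t" "t \<le> 1" using P Q by (auto simp: t_def field_simps)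
    have P0e: "P0 = t * Q" using Q by (simp add: t_def)
    have "P0 powr a * (Q - P0) = (t powr a * Q powr a) * (Q * (1 - t))"
      by (simp add: P0e powr_mult algebra_simps)
    also have "\<dots> = (Q powr a * Q) * ((1 - t) * (1 - (1 - t)) powr a)" by (simp add: algebra_simps)
    also have "Q powr a * Q = Q powr (a + 1)" using powr_1_split[of Q a] Q by simp
    also have "(1 - t) * (1 - (1 - t)) powr a \<le> g p"
      using g_max[of p "1 - t"] p t by (simp add: a_def)
    finally show ?thesis using Q by (simp add: mult_left_mono mult.commute)
  qed
  then have "k powr (- a) * (P0 powr a * (Q - P0)) \<le> k powr (- a) * (g p * Q powr (a + 1))"
    by (rule mult_left_mono) simp
  moreover have "W \<le> k powr (- a) * (P0 powr a * (Q - P0))"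
    using H4 unfolding a_def[symmetric] kk by (simp only: mult_ac)
  ultimately show ?thesis unfolding e2 e3 by (simp only: mult_ac)
qed

lemma fin_main:
  fixes k P0 Q W a0 a1 X B \<eta> d p :: real
  assumes p: "0 < p" "p < 1" and k: "k > 0" and d: "1/2 \<le> d" "d < 1"
    and P: "0 \<le> P0" "P0 \<le> Q" and eta: "0 \<le> \<eta>" and X: "0 \<le> X"
    and H1: "(1 - d) * (a0 + a1) \<le> (X + \<eta>)\<^sup>2"
    and H2: "X\<^sup>2 \<le> W + d * B\<^sup>2"
    and H3: "B\<^sup>2 \<le> Msq p * (k powr (1 - 2/p) * Q powr (2/p))"
    and H4: "W \<le> (P0 / k) powr (2/p - 1) * (Q - P0)"
    and H5: "k powr (1 - 2/p) * P0 powr (2/p) \<le> a1"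
    and Hg: "2 * g p \<le> Msq p"
  shows "a0 \<le> (sqrt (((2 - d) powr (1 - 2/p) * g p + d * Msq p) / (1 - d) * (k powr (1 - 2/p) * Q powr (2/p)))
                 + sqrt 2 * \<eta> / sqrt (1 - d))\<^sup>2"
proof -
  define K where "K = k powr (1 - 2/p) * Q powr (2/p)"
  define G2 where "G2 = (2 - d) powr (1 - 2/p)"
  define Z2 where "Z2 = (G2 * g p + d * Msq p) / (1 - d) * K"
  have K: "0 \<le> K" by (simp add: K_def)
  have G2: "0 \<le> G2" by (simp add: G2_def)
  have gpos: "0 \<le> g p" using p by (simp add: g_def)
  have Ms: "0 \<le> Msq p" using Hg gpos by linarith
  have dd: "0 < 1 - d" using d by simp
  have Z2: "0 \<le> Z2" using K G2 gpos Ms d dd by (simp add: Z2_def)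
  have Z2e: "(1 - d) * Z2 = G2 * g p * K + d * Msq p * K" using dd by (simp add: Z2_def field_simps)
  have i: "W - (1 - d) * a1 \<le> G2 * g p * K"
    using fin_i[OF p k _ _ P H4 H5] d unfolding G2_def K_def by simp
  have ii: "W \<le> g p * K" using fin_ii[OF p k P H4] unfolding K_def .
  have b3: "d * B\<^sup>2 \<le> d * Msq p * K" using H3 d unfolding K_def by (simp add: mult_left_mono)
  have A: "(1 - d) * a0 \<le> (1 - d) * Z2 + 2 * X * \<eta> + \<eta>\<^sup>2"
  proof -
    have "(1 - d) * a0 \<le> (X + \<eta>)\<^sup>2 - (1 - d) * a1" using H1 by (simp add: algebra_simps)
    also have "\<dots> = X\<^sup>2 - (1 - d) * a1 + 2 * X * \<eta> + \<eta>\<^sup>2" by (simp add: power2_eq_square algebra_simps)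
    finally show ?thesis using H2 i b3 Z2e by linarith
  qed
  have Bx: "X\<^sup>2 \<le> 2 * (1 - d) * Z2"
  proof -
    have "g p * K \<le> d * Msq p * K"
    proof -
      have "(1/2) * Msq p \<le> d * Msq p" using d Ms by (intro mult_right_mono) auto
      then have "g p \<le> d * Msq p" using Hg by linarith
      then show ?thesis using K by (simp add: mult_right_mono)
    qed
    moreover have "0 \<le> G2 * g p * K" using G2 gpos K by simp
    ultimately show ?thesis using H2 ii b3 Z2e by linarith
  qed
  define s1 where "s1 = sqrt (1 - d)"
  define sZ where "sZ = sqrt Z2"
  have s1: "s1 > 0" "s1\<^sup>2 = 1 - d" using dd by (auto simp: s1_def)
  have sZ: "sZ \<ge> 0" "sZ\<^sup>2 = Z2" using Z2 by (auto simp: sZ_def)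
  have r2: "(sqrt 2)\<^sup>2 = (2::real)" by simp
  have Xb: "X \<le> sqrt 2 * s1 * sZ"
  proof -
    have "X\<^sup>2 \<le> (sqrt 2 * s1 * sZ)\<^sup>2" using Bx s1 sZ by (simp add: power_mult_distrib)
    moreover have "0 \<le> sqrt 2 * s1 * sZ" using s1 sZ by simp
    ultimately show ?thesis by (rule power2_le_imp_le)
  qed
  have "(1 - d) * a0 \<le> (1 - d) * Z2 + 2 * (sqrt 2 * s1 * sZ) * \<eta> + 2 * \<eta>\<^sup>2"
  proof -
    have "2 * X * \<eta> \<le> 2 * (sqrt 2 * s1 * sZ) * \<eta>" using Xb eta by (simp add: mult_right_mono)
    moreover have "\<eta>\<^sup>2 \<le> 2 * \<eta>\<^sup>2" by simp
    ultimately show ?thesis using A by linarith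
  qed
  also have "\<dots> = s1\<^sup>2 * (sZ + sqrt 2 * \<eta> / s1)\<^sup>2"
  proof -
    have e: "s1 * (sZ + sqrt 2 * \<eta> / s1) = s1 * sZ + sqrt 2 * \<eta>" using s1 by (simp add: distrib_left)
    have "s1\<^sup>2 * (sZ + sqrt 2 * \<eta> / s1)\<^sup>2 = (s1 * (sZ + sqrt 2 * \<eta> / s1))\<^sup>2"
      by (simp only: power_mult_distrib)
    also have "\<dots> = (s1 * sZ + sqrt 2 * \<eta>)\<^sup>2" by (simp only: e)
    also have "\<dots> = s1\<^sup>2 * sZ\<^sup>2 + 2 * (sqrt 2 * s1 * sZ) * \<eta> + (sqrt 2)\<^sup>2 * \<eta>\<^sup>2"
      by (simp add: power2_eq_square algebra_simps)
    also have "\<dots> = (1 - d) * Z2 + 2 * (sqrt 2 * s1 * sZ) * \<eta> + 2 * \<eta>\<^sup>2"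
      by (simp only: s1 sZ r2)
    finally show ?thesis by simp
  qed
  finally have "s1\<^sup>2 * a0 \<le> s1\<^sup>2 * (sZ + sqrt 2 * \<eta> / s1)\<^sup>2" using s1 by simp
  then have "a0 \<le> (sZ + sqrt 2 * \<eta> / s1)\<^sup>2"
    using s1 dd mult_le_cancel_left_pos[of "s1\<^sup>2" a0 "(sZ + sqrt 2 * \<eta> / s1)\<^sup>2"] by simp
  then show ?thesis unfolding sZ_def s1_def Z2_def K_def G2_def .
qed

lemma fin_p:
  fixes k Q F \<eta> d p a0 NT :: real
  assumes p: "0 < p" "p < 1" and k: "k > 0" and Q: "0 \<le> Q" and F: "0 \<le> F" and eta: "0 \<le> \<eta>"
    and d: "d < 1" and a0: "0 \<le> a0"
    and A: "a0 \<le> (sqrt (F * (k powr (1 - 2/p) * Q powr (2/p))) + sqrt 2 * \<eta> / sqrt (1 - d))\<^sup>2"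
    and N: "NT \<le> k powr (1 - p/2) * a0 powr (p/2)"
  shows "NT \<le> F powr (p/2) * Q + 2 powr (p/2) * k powr (1 - p/2) * \<eta> powr p / (1 - d) powr (p/2)"
proof -
  define Z where "Z = sqrt (F * (k powr (1 - 2/p) * Q powr (2/p)))"
  define E where "E = sqrt 2 * \<eta> / sqrt (1 - d)"
  have Z: "0 \<le> Z" and E: "0 \<le> E" using F eta d by (auto simp: Z_def E_def)
  have "a0 powr (p/2) \<le> ((Z + E)\<^sup>2) powr (p/2)"
    using A a0 p by (intro powr_mono2) (auto simp: Z_def E_def)
  also have "((Z + E)\<^sup>2) powr (p/2) = (Z + E) powr p"
  proof -
    have "((Z + E)\<^sup>2) powr (p/2) = ((Z + E) powr 2) powr (p/2)" using Z E by simp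
    also have "\<dots> = (Z + E) powr p" by (simp add: powr_powr)
    finally show ?thesis .
  qed
  also have "\<dots> \<le> Z powr p + E powr p" using Z E p by (intro powr_subadd) auto
  finally have a: "a0 powr (p/2) \<le> Z powr p + E powr p" .
  have zp: "k powr (1 - p/2) * Z powr p = F powr (p/2) * Q"
  proof -
    have "Z powr p = (F * (k powr (1 - 2/p) * Q powr (2/p))) powr (p/2)"
    proof -
      have "Z = (F * (k powr (1 - 2/p) * Q powr (2/p))) powr (1/2)"
        using F Q unfolding Z_def by (simp add: powr_half_sqrt)
      then show ?thesis by (simp add: powr_powr)
    qed
    also have "\<dots> = F powr (p/2) * (k powr ((1 - 2/p) * (p/2)) * Q powr ((2/p) * (p/2)))"
      by (simp add: powr_mult powr_powr)
    also have "(1 - 2/p) * (p/2) = p/2 - 1" using p by (simp add: field_simps)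
    also have "(2/p) * (p/2) = 1" using p by simp
    finally have "Z powr p = F powr (p/2) * (k powr (p/2 - 1) * Q)" using Q by simp
    then have "k powr (1 - p/2) * Z powr p = F powr (p/2) * Q * (k powr (1 - p/2) * k powr (p/2 - 1))"
      by (simp add: algebra_simps)
    also have "k powr (1 - p/2) * k powr (p/2 - 1) = 1" using k by (simp flip: powr_add)
    finally show ?thesis by simp
  qed
  have ep: "E powr p = 2 powr (p/2) * \<eta> powr p / (1 - d) powr (p/2)"
  proof -
    have "E powr p = (sqrt 2) powr p * \<eta> powr p / (sqrt (1 - d)) powr p"
      unfolding E_def by (simp add: powr_divide powr_mult)
    also have "(sqrt 2) powr p = 2 powr (p/2)" by (simp add: powr_half_sqrt[symmetric] powr_powr)
    also have "(sqrt (1 - d)) powr p = (1 - d) powr (p/2)"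
      using d by (simp add: powr_half_sqrt[symmetric] powr_powr)
    finally show ?thesis .
  qed
  have "NT \<le> k powr (1 - p/2) * (Z powr p + E powr p)"
    using N a by (smt (verit) mult_left_mono powr_ge_zero)
  also have "\<dots> = F powr (p/2) * Q + k powr (1 - p/2) * E powr p"
    using zp by (simp add: distrib_left)
  finally show ?thesis by (simp add: ep mult_ac)
qed


lemma abs_powr_sq:
  fixes z p :: real
  shows "\<bar>z\<bar> powr p = (z\<^sup>2) powr (p / 2)"
proof -
  have "z\<^sup>2 = \<bar>z\<bar> powr 2" by simp
  then have "(z\<^sup>2) powr (p / 2) = \<bar>z\<bar> powr (2 * (p / 2))" by (simp only: powr_powr)
  then show ?thesis by simp
qed

lemma power_mean:
  fixes z :: "'a \<Rightarrow> real" and p :: real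
  assumes "finite S" "card S = k" "k > 0" "0 < p" "p \<le> 2"
  shows "(\<Sum>j\<in>S. \<bar>z j\<bar> powr p) \<le> real k powr (1 - p / 2) * (\<Sum>j\<in>S. (z j)\<^sup>2) powr (p / 2)"
proof -
  define U where "U = (\<Sum>j\<in>S. (z j)\<^sup>2)"
  define \<gamma> where "\<gamma> = p / 2"
  have g: "0 < \<gamma>" "\<gamma> \<le> 1" using assms by (auto simp: \<gamma>_def)
  show ?thesis
  proof (cases "U = 0")
    case True
    then have "\<forall>j\<in>S. z j = 0" using assms(1) unfolding U_def
      by (simp add: sum_nonneg_eq_0_iff)
    then show ?thesis using assms by simp
  next
    case False
    have U: "U > 0" using False unfolding U_def by (metis less_eq_real_def sum_nonneg zero_le_power2)
    define m where "m = U / k"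
    have m: "m > 0" using U assms by (simp add: m_def)
    have "(\<Sum>j\<in>S. \<bar>z j\<bar> powr p) = (\<Sum>j\<in>S. ((z j)\<^sup>2) powr \<gamma>)"
      by (simp add: abs_powr_sq \<gamma>_def)
    also have "\<dots> \<le> (\<Sum>j\<in>S. m powr \<gamma> * (\<gamma> * ((z j)\<^sup>2 / m) + (1 - \<gamma>)))"
      using g m by (intro sum_mono powr_tangent) auto
    also have "\<dots> = (\<Sum>j\<in>S. (m powr \<gamma> * \<gamma> / m) * (z j)\<^sup>2 + m powr \<gamma> * (1 - \<gamma>))"
      by (intro sum.cong) (auto simp: field_simps)
    also have "\<dots> = (m powr \<gamma> * \<gamma> / m) * U + k * (m powr \<gamma> * (1 - \<gamma>))"
      unfolding sum.distrib sum_distrib_left[symmetric] U_def using assms by simp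
    also have "\<dots> = m powr \<gamma> * (\<gamma> * (U / m) + k * (1 - \<gamma>))"
      by (simp add: field_simps)
    also have "\<dots> = m powr \<gamma> * k"
      using assms m by (simp add: m_def field_simps)
    also have "\<dots> = real k powr (1 - \<gamma>) * U powr \<gamma>"
      using assms U by (simp add: m_def powr_divide powr_diff field_simps)
    finally show ?thesis by (simp add: U_def \<gamma>_def)
  qed
qed


lemma sqnorm_rs:
  assumes "U \<subseteq> {..<n}"
  shows "sqnorm n (rs U h) = (\<Sum>e\<in>U. (h e)\<^sup>2)"
proof -
  have "sqnorm n (rs U h) = (\<Sum>t<n. if t \<in> U then (h t)\<^sup>2 else 0)"
    unfolding sqnorm_def rs_def by (intro sum.cong) auto
  also have "\<dots> = (\<Sum>t\<in>{..<n} \<inter> U. (h t)\<^sup>2)" by (rule sum.inter_restrict[symmetric]) simp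
  also have "{..<n} \<inter> U = U" using assms by auto
  finally show ?thesis .
qed

lemma L2_set_neg: "L2_set (\<lambda>i. - u i) A = L2_set u A"
  by (simp add: L2_set_def)

lemma double_sum_bound:
  fixes G :: "nat \<Rightarrow> nat \<Rightarrow> real"
  assumes "finite J" "\<And>j j'. j \<in> J \<Longrightarrow> j' \<in> J \<Longrightarrow> G j j' \<le> d * b j * b j' + (if j = j' then c j else 0)"
  shows "(\<Sum>j\<in>J. \<Sum>j'\<in>J. G j j') \<le> d * (\<Sum>j\<in>J. b j)\<^sup>2 + (\<Sum>j\<in>J. c j)"
proof -
  have "(\<Sum>j\<in>J. \<Sum>j'\<in>J. G j j') \<le> (\<Sum>j\<in>J. \<Sum>j'\<in>J. d * b j * b j' + (if j = j' then c j else 0))"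
    using assms by (intro sum_mono) auto
  also have "\<dots> = (\<Sum>j\<in>J. \<Sum>j'\<in>J. d * b j * b j') + (\<Sum>j\<in>J. \<Sum>j'\<in>J. (if j = j' then c j else 0))"
    by (simp add: sum.distrib)
  also have "(\<Sum>j\<in>J. \<Sum>j'\<in>J. d * b j * b j') = d * (\<Sum>j\<in>J. b j)\<^sup>2"
  proof -
    have "(\<Sum>j\<in>J. \<Sum>j'\<in>J. d * b j * b j') = d * (\<Sum>j\<in>J. \<Sum>j'\<in>J. b j * b j')"
      by (simp add: sum_distrib_left mult.assoc)
    also have "(\<Sum>j\<in>J. \<Sum>j'\<in>J. b j * b j') = (\<Sum>j\<in>J. b j)\<^sup>2"
      by (simp add: power2_eq_square sum_product)
    finally show ?thesis .
  qed
  also have "(\<Sum>j\<in>J. \<Sum>j'\<in>J. (if j = j' then c j else 0)) = (\<Sum>j\<in>J. c j)"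
    using assms(1) by (simp add: sum.delta)
  finally show ?thesis .
qed

lemma idx_lt:
  fixes j i k l :: nat
  assumes "j < l" "i < k"
  shows "j * k + i < l * k"
proof -
  have "j * k + i < Suc j * k" using assms by simp
  also have "Suc j * k \<le> l * k" using assms by (intro mult_le_mono1) simp
  finally show ?thesis .
qed

lemma idx_div: "i < (k::nat) \<Longrightarrow> (j * k + i) div k = j"
  by simp


lemma nsp_main:
  fixes A :: "nat \<Rightarrow> nat \<Rightarrow> real" and m n k l :: nat and d p \<eta> :: real
    and h :: "nat \<Rightarrow> real" and T :: "nat set" and \<sigma> :: "nat \<Rightarrow> nat"
  assumes k: "0 < k" and l: "0 < l" and n: "n = (l + 1) * k"
    and rip: "ripP A m n (2 * k) d"
    and d: "1/2 \<le> d" "d < 1" and p: "0 < p" "p < 1"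
    and T: "T \<subseteq> {..<n}" "card T = k"
    and sig: "bij_betw \<sigma> {..<l * k} ({..<n} - T)"
    and srt: "\<And>i j. i \<le> j \<Longrightarrow> j < l * k \<Longrightarrow> \<bar>h (\<sigma> j)\<bar> \<le> \<bar>h (\<sigma> i)\<bar>"
    and eta: "norm2 m (matvec A n h) \<le> \<eta>"
  shows "(\<Sum>j\<in>T. \<bar>h j\<bar> powr p) \<le> Cp d p * (\<Sum>j\<in>{..<n} - T. \<bar>h j\<bar> powr p)
           + 2 powr (p/2) * real k powr (1 - p/2) * \<eta> powr p / (1 - d) powr (p/2)"
proof -
  define R where "R = {..<n} - T"
  have fR: "finite R" by (simp add: R_def)
  have fT: "finite T" using T finite_subset by blast
  have TR: "T \<inter> R = {}" "T \<union> R = {..<n}" using T by (auto simp: R_def)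
  have inj: "inj_on \<sigma> {..<l * k}" and img: "\<sigma> ` {..<l * k} = R"
    using sig by (auto simp: bij_betw_def R_def)
  define blk where "blk j = (\<lambda>i. \<sigma> (j * k + i)) ` {..<k}" for j
  have blk_inj: "inj_on (\<lambda>i. \<sigma> (j * k + i)) {..<k}" if "j < l" for j
  proof (rule inj_onI)
    fix i i' assume "i \<in> {..<k}" "i' \<in> {..<k}" "\<sigma> (j * k + i) = \<sigma> (j * k + i')"
    then have "j * k + i = j * k + i'" using inj idx_lt[OF that] by (auto dest: inj_onD)
    then show "i = i'" by simp
  qed
  have blk_sub: "blk j \<subseteq> R" if "j < l" for j
    using idx_lt[OF that] img by (auto simp: blk_def)
  have blk_card: "card (blk j) = k" if "j < l" for j
    using card_image[OF blk_inj[OF that]] by (simp add: blk_def)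
  have blk_sum: "(\<Sum>e\<in>blk j. F e) = (\<Sum>i<k. F (\<sigma> (j * k + i)))" if "j < l" for j and F :: "nat \<Rightarrow> real"
    unfolding blk_def using sum.reindex[OF blk_inj[OF that], of F] by (simp add: comp_def)
  have blk_disj: "blk j \<inter> blk j' = {}" if "j < l" "j' < l" "j \<noteq> j'" for j j'
  proof (rule ccontr)
    assume "blk j \<inter> blk j' \<noteq> {}"
    then obtain i i' where ii: "i < k" "i' < k" "\<sigma> (j * k + i) = \<sigma> (j' * k + i')"
      by (auto simp: blk_def)
    then have "j * k + i = j' * k + i'" using inj idx_lt[OF that(1) ii(1)] idx_lt[OF that(2) ii(2)]
      by (auto dest: inj_onD)
    then have "(j * k + i) div k = (j' * k + i') div k" by simp
    then show False using ii that by simp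
  qed
  have blk_cover: "\<exists>j<l. e \<in> blk j" if "e \<in> R" for e
  proof -
    have "e \<in> \<sigma> ` {..<l * k}" using that img by simp
    then obtain t where t: "t < l * k" "e = \<sigma> t" by auto
    have "t div k < l" using t k by (simp add: less_mult_imp_div_less)
    moreover have "t mod k < k" using k by simp
    moreover have "t = t div k * k + t mod k" by simp
    ultimately show ?thesis using t unfolding blk_def by (metis imageI lessThan_iff)
  qed
  have T_blk: "T \<inter> blk j = {}" if "j < l" for j using blk_sub[OF that] TR by auto
  have sumR: "(\<Sum>e\<in>R. F e) = (\<Sum>j<l. \<Sum>i<k. F (\<sigma> (j * k + i)))" for F :: "nat \<Rightarrow> real"
  proof -
    have "(\<Sum>e\<in>R. F e) = (\<Sum>t<l * k. F (\<sigma> t))"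
      using sum.reindex_bij_betw[OF sig, of F] by (simp add: R_def)
    also have "\<dots> = (\<Sum>j<l. \<Sum>i<k. F (\<sigma> (j * k + i)))" by (rule sum_blocks)
    finally show ?thesis .
  qed
  define P where "P j = (\<Sum>i<k. \<bar>h (\<sigma> (j * k + i))\<bar> powr p)" for j
  define S where "S j = (\<Sum>i<k. (h (\<sigma> (j * k + i)))\<^sup>2)" for j
  define Q where "Q = (\<Sum>j<l. P j)"
  define a0 where "a0 = (\<Sum>e\<in>T. (h e)\<^sup>2)"
  define NT where "NT = (\<Sum>e\<in>T. \<bar>h e\<bar> powr p)"
  define W where "W = (\<Sum>j\<in>{1..<l}. S j)"
  define B where "B = (\<Sum>j\<in>{1..<l}. sqrt (S j))"
  have QR: "(\<Sum>e\<in>R. \<bar>h e\<bar> powr p) = Q" unfolding Q_def P_def by (rule sumR)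
  have Pnn: "0 \<le> P j" for j by (simp add: P_def sum_nonneg)
  have Snn: "0 \<le> S j" for j by (simp add: S_def sum_nonneg)
  have Qs: "Q = P 0 + (\<Sum>j\<in>{1..<l}. P j)"
    unfolding Q_def using l by (simp add: lessThan_atLeast0 sum.atLeast_Suc_lessThan)
  have P0Q: "P 0 \<le> Q" using Qs Pnn by (simp add: sum_nonneg)
  have Pdec: "P j \<le> P (j - 1)" if "1 \<le> j" "j < l" for j
    unfolding P_def
  proof (rule sum_mono)
    fix i assume "i \<in> {..<k}"
    then have "(j - 1) * k + i \<le> j * k + i" "j * k + i < l * k" using that idx_lt[OF that(2), of i]
      by (auto simp: diff_mult_distrib)
    then show "\<bar>h (\<sigma> (j * k + i))\<bar> powr p \<le> \<bar>h (\<sigma> ((j - 1) * k + i))\<bar> powr p"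
      using srt p by (intro powr_mono2) auto
  qed
  have Pavg: "\<bar>h (\<sigma> (j * k + i))\<bar> powr p \<le> P j' / k" if "j < l" "i < k" "j' < j" for j i j'
    unfolding P_def
  proof (rule avg_bound)
    fix i' assume "i' \<in> {..<k}"
    then have "j' * k + i' \<le> j * k + i"
    proof -
      have "j' * k + i' < Suc j' * k" using \<open>i' \<in> {..<k}\<close> by simp
      also have "Suc j' * k \<le> j * k" using that by (intro mult_le_mono1) simp
      finally show ?thesis by simp
    qed
    then show "\<bar>h (\<sigma> (j * k + i))\<bar> \<le> \<bar>h (\<sigma> (j' * k + i'))\<bar>"
      using srt idx_lt[OF that(1,2)] by auto
  qed (use p k in auto)
  have Sb: "S j \<le> (P j' / k) powr (2/p - 1) * P j" if "j < l" "j' < j" for j j'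
    unfolding S_def P_def[of j]
    by (rule blk[OF p]) (use Pnn Pavg[OF that(1) _ that(2)] in \<open>auto simp: P_def\<close>)
  have Wb: "W \<le> (P 0 / k) powr (2/p - 1) * (Q - P 0)"
  proof -
    have "W \<le> (\<Sum>j\<in>{1..<l}. (P 0 / k) powr (2/p - 1) * P j)"
      unfolding W_def by (intro sum_mono Sb) auto
    also have "\<dots> = (P 0 / k) powr (2/p - 1) * (Q - P 0)"
      using Qs by (simp add: sum_distrib_left)
    finally show ?thesis .
  qed
  have a1b: "real k powr (1 - 2/p) * P 0 powr (2/p) \<le> S 0"
  proof -
    have pm: "P 0 \<le> real k powr (1 - p/2) * S 0 powr (p/2)"
      unfolding P_def S_def using power_mean[of "{..<k}" k p "\<lambda>i. h (\<sigma> (0 * k + i))"] k p by simp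
    have "P 0 powr (2/p) \<le> (real k powr (1 - p/2) * S 0 powr (p/2)) powr (2/p)"
      using pm Pnn p by (intro powr_mono2) auto
    also have "\<dots> = real k powr (2/p - 1) * S 0"
    proof -
      have "(real k powr (1 - p/2) * S 0 powr (p/2)) powr (2/p) = real k powr ((1 - p/2) * (2/p)) * S 0 powr ((p/2) * (2/p))"
        by (simp add: powr_mult powr_powr)
      also have "(1 - p/2) * (2/p) = 2/p - 1" using p by (simp add: field_simps)
      also have "(p/2) * (2/p) = 1" using p by simp
      finally show ?thesis using Snn[of 0] by simp
    qed
    finally have "real k powr (1 - 2/p) * P 0 powr (2/p) \<le> real k powr (1 - 2/p) * (real k powr (2/p - 1) * S 0)"
      by (intro mult_left_mono) auto
    also have "\<dots> = S 0"
    proof -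
      have "real k powr (1 - 2/p) * real k powr (2/p - 1) = 1" using k by (simp flip: powr_add)
      then show ?thesis by (simp add: mult.assoc[symmetric])
    qed
    finally show ?thesis .
  qed
  have NTb: "NT \<le> real k powr (1 - p/2) * a0 powr (p/2)"
    unfolding NT_def a0_def using power_mean[OF fT T(2) k, of p h] p by simp
  have Bb: "B \<le> real k powr (1/2 - 1/p) * (Mb p * Q powr (1/p))"
  proof -
    have "sqrt (S j) \<le> real k powr (1/2 - 1/p) * (P (j - 1) powr (1/p - 1/2) * P j powr (1/2))"
      if "j \<in> {1..<l}" for j
    proof -
      have "sqrt (S j) \<le> sqrt ((P (j - 1) / k) powr (2/p - 1) * P j)"
        using Sb[of j "j - 1"] that by (intro real_sqrt_le_mono) auto
      also have "\<dots> = ((P (j - 1) / k) powr (2/p - 1) * P j) powr (1/2)"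
        using Pnn by (simp add: powr_half_sqrt)
      also have "\<dots> = (P (j - 1) / k) powr ((2/p - 1) * (1/2)) * P j powr (1/2)"
        by (simp add: powr_mult powr_powr)
      also have "(2/p - 1) * (1/2) = 1/p - 1/2" by (simp add: field_simps)
      also have "(P (j - 1) / k) powr (1/p - 1/2) = real k powr (1/2 - 1/p) * P (j - 1) powr (1/p - 1/2)"
      proof -
        have "(P (j - 1) / k) powr (1/p - 1/2) = P (j - 1) powr (1/p - 1/2) / real k powr (1/p - 1/2)"
          by (rule powr_divide)
        also have "1 / real k powr (1/p - 1/2) = real k powr (1/2 - 1/p)"
          by (simp add: powr_minus_divide[symmetric])
        then have "P (j - 1) powr (1/p - 1/2) / real k powr (1/p - 1/2) = real k powr (1/2 - 1/p) * P (j - 1) powr (1/p - 1/2)"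
          by (metis times_divide_eq_right mult.right_neutral mult.commute)
        finally show ?thesis .
      qed
      finally show ?thesis by (simp add: mult.assoc)
    qed
    then have "B \<le> (\<Sum>j\<in>{1..<l}. real k powr (1/2 - 1/p) * (P (j - 1) powr (1/p - 1/2) * P j powr (1/2)))"
      unfolding B_def by (intro sum_mono) auto
    also have "\<dots> = real k powr (1/2 - 1/p) * (\<Sum>j\<in>{1..<l}. P (j - 1) powr (1/p - 1/2) * P j powr (1/2))"
      by (simp add: sum_distrib_left)
    also have "\<dots> \<le> real k powr (1/2 - 1/p) * (Mb p * Q powr (1/p))"
      unfolding Q_def using SL[OF p, of l P] Pnn Pdec by (intro mult_left_mono) auto
    finally show ?thesis .
  qed
  have B2: "B\<^sup>2 \<le> Msq p * (real k powr (1 - 2/p) * Q powr (2/p))"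
  proof -
    have B0: "0 \<le> B" unfolding B_def by (intro sum_nonneg) (simp add: Snn)
    have "B\<^sup>2 \<le> (real k powr (1/2 - 1/p) * (Mb p * Q powr (1/p)))\<^sup>2"
      using Bb B0 by (intro power_mono) auto
    also have "\<dots> = (real k powr (1/2 - 1/p))\<^sup>2 * (Mb p)\<^sup>2 * (Q powr (1/p))\<^sup>2"
      by (simp add: power_mult_distrib)
    also have "(Mb p)\<^sup>2 = Msq p"
    proof -
      have "0 \<le> Msq p" using Msq_ge_2[OF p] by (smt (verit) powr_ge_zero)
      then show ?thesis by (simp add: Mb_def)
    qed
    also have "(real k powr (1/2 - 1/p))\<^sup>2 = real k powr (1 - 2/p)"
      by (simp add: powr_sq algebra_simps)
    also have "(Q powr (1/p))\<^sup>2 = Q powr (2/p)" by (simp add: powr_sq)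
    finally show ?thesis by (simp add: mult_ac)
  qed
  define v where "v j = rs (blk j) h" for j
  define hS where "hS = rs (T \<union> blk 0) h"
  define w where "w t = (\<Sum>j\<in>{1..<l}. v j t)" for t
  have sv: "sqnorm n (v j) = S j" if "j < l" for j
    unfolding v_def using sqnorm_rs[of "blk j" n h] blk_sub[OF that] blk_sum[OF that] R_def
    by (auto simp: S_def)
  have shS: "sqnorm n hS = a0 + S 0"
  proof -
    have "sqnorm n hS = (\<Sum>e\<in>T \<union> blk 0. (h e)\<^sup>2)"
      unfolding hS_def using T blk_sub[OF l] R_def by (intro sqnorm_rs) auto
    also have "\<dots> = a0 + (\<Sum>e\<in>blk 0. (h e)\<^sup>2)"
      unfolding a0_def using fT T_blk[OF l] by (intro sum.union_disjoint) (auto simp: blk_def)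
    also have "(\<Sum>e\<in>blk 0. (h e)\<^sup>2) = S 0" using blk_sum[OF l] by (simp add: S_def)
    finally show ?thesis .
  qed
  have dec: "h t = hS t + w t" if "t < n" for t
  proof (cases "t \<in> T")
    case True
    then have "t \<notin> blk j" if "j < l" for j using T_blk[OF that] by auto
    then have "w t = 0" unfolding w_def v_def rs_def by (intro sum.neutral) auto
    then show ?thesis using True by (simp add: hS_def rs_def)
  next
    case False
    then have "t \<in> R" using that by (simp add: R_def)
    then obtain j0 where j0: "j0 < l" "t \<in> blk j0" using blk_cover by blast
    have nj: "t \<notin> blk j" if "j < l" "j \<noteq> j0" for j using blk_disj[OF that(1) j0(1) that(2)] j0 by auto
    show ?thesis
    proof (cases "j0 = 0")
      case True
      then have "w t = 0" unfolding w_def v_def rs_def using nj by (intro sum.neutral) auto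
      then show ?thesis using j0 True by (simp add: hS_def rs_def)
    next
      case False
      have "w t = (\<Sum>j\<in>{1..<l}. if j = j0 then h t else 0)"
        unfolding w_def v_def rs_def using nj j0 by (intro sum.cong) auto
      also have "\<dots> = h t" using j0 False by simp
      finally have "w t = h t" .
      moreover have "hS t = 0" using \<open>t \<notin> T\<close> nj[of 0] False l by (simp add: hS_def rs_def)
      ultimately show ?thesis by simp
    qed
  qed
  have Ah: "matvec A n h i = matvec A n hS i + matvec A n w i" for i
  proof -
    have "matvec A n h = matvec A n (\<lambda>t. hS t + w t)" using dec by (intro matvec_cong) auto
    then show ?thesis by (simp add: matvec_add)
  qed
  have Aw: "matvec A n w i = (\<Sum>j\<in>{1..<l}. matvec A n (v j) i)" for i
    unfolding w_def by (rule matvec_sum)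
  have sphS: "sparse (2 * k) n hS"
  proof (rule sparse_support[of "T \<union> blk 0"])
    show "T \<union> blk 0 \<subseteq> {..<n}" using T blk_sub[OF l] R_def by auto
    have "card (T \<union> blk 0) \<le> card T + card (blk 0)" by (rule card_Un_le)
    then show "card (T \<union> blk 0) \<le> 2 * k" using T blk_card[OF l] by simp
    show "\<And>j. j < n \<Longrightarrow> j \<notin> T \<union> blk 0 \<Longrightarrow> hS j = 0" by (simp add: hS_def rs_def)
  qed
  have R1: "(1 - d) * (a0 + S 0) \<le> sqnorm m (matvec A n hS)"
    using rip sphS shS unfolding ripP_def by metis
  define X where "X = norm2 m (matvec A n w)"
  have X0: "0 \<le> X" by (simp add: X_def norm2_def sqnorm_nonneg)
  have eta0: "0 \<le> \<eta>" using eta by (smt (verit) norm2_def real_sqrt_ge_zero sqnorm_nonneg)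
  have nhS: "norm2 m (matvec A n hS) \<le> X + \<eta>"
  proof -
    have "norm2 m (matvec A n hS) = L2_set (\<lambda>i. matvec A n h i + (- matvec A n w i)) {..<m}"
      unfolding norm2_L2 using Ah by (intro L2_set_cong) (auto simp: algebra_simps)
    also have "\<dots> \<le> L2_set (matvec A n h) {..<m} + L2_set (\<lambda>i. - matvec A n w i) {..<m}"
      by (rule L2_set_triangle_ineq)
    also have "\<dots> = norm2 m (matvec A n h) + X"
      using L2_set_neg[of "matvec A n w" "{..<m}"] by (simp add: norm2_L2 X_def)
    finally show ?thesis using eta by simp
  qed
  have H1: "(1 - d) * (a0 + S 0) \<le> (X + \<eta>)\<^sup>2"
  proof -
    have "sqnorm m (matvec A n hS) = (norm2 m (matvec A n hS))\<^sup>2"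
      by (simp add: norm2_def sqnorm_nonneg)
    also have "\<dots> \<le> (X + \<eta>)\<^sup>2"
      using nhS by (intro power_mono) (auto simp: norm2_def sqnorm_nonneg)
    finally show ?thesis using R1 by simp
  qed
  have H2: "X\<^sup>2 \<le> W + d * B\<^sup>2"
  proof -
    have "X\<^sup>2 = sqnorm m (matvec A n w)" by (simp add: X_def norm2_def sqnorm_nonneg)
    also have "\<dots> = sqnorm m (\<lambda>i. \<Sum>j\<in>{1..<l}. matvec A n (v j) i)"
    proof -
      have "matvec A n w = (\<lambda>i. \<Sum>j\<in>{1..<l}. matvec A n (v j) i)" using Aw by (intro ext) simp
      then show ?thesis by simp
    qed
    also have "\<dots> = (\<Sum>j\<in>{1..<l}. \<Sum>j'\<in>{1..<l}. ip m (matvec A n (v j)) (matvec A n (v j')))"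
      by (rule sqnorm_sum_expand)
    also have "\<dots> \<le> d * (\<Sum>j\<in>{1..<l}. sqrt (S j))\<^sup>2 + (\<Sum>j\<in>{1..<l}. S j)"
    proof (rule double_sum_bound)
      fix j j' assume jj: "j \<in> {1..<l}" "j' \<in> {1..<l}"
      show "ip m (matvec A n (v j)) (matvec A n (v j')) \<le> d * sqrt (S j) * sqrt (S j') + (if j = j' then S j else 0)"
      proof (cases "j = j'")
        case True
        have spv: "sparse (2 * k) n (v j)"
          by (rule sparse_support[of "blk j"]) (use blk_sub blk_card jj R_def in \<open>auto simp: v_def rs_def\<close>)
        have "ip m (matvec A n (v j)) (matvec A n (v j')) = sqnorm m (matvec A n (v j))"
          using True by (simp add: ip_self)
        also have "\<dots> \<le> (1 + d) * S j" using rip spv sv[of j] jj unfolding ripP_def by auto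
        also have "\<dots> = d * sqrt (S j) * sqrt (S j) + S j" using Snn[of j] by (simp add: algebra_simps)
        finally show ?thesis using True by simp
      next
        case False
        have "ip m (matvec A n (v j)) (matvec A n (v j')) \<le> \<bar>ip m (matvec A n (v j)) (matvec A n (v j'))\<bar>" by simp
        also have "\<dots> \<le> d * sqrt (sqnorm n (v j)) * sqrt (sqnorm n (v j'))"
        proof (rule ip_bound[OF rip, of "blk j" "blk j'"])
          show "0 \<le> d" using d by simp
          show "blk j \<subseteq> {..<n}" "blk j' \<subseteq> {..<n}" using blk_sub jj R_def by auto
          show "blk j \<inter> blk j' = {}" using blk_disj False jj by auto
          show "card (blk j) \<le> k" "card (blk j') \<le> k" using blk_card jj by auto
        qed (auto simp: v_def rs_def)
        also have "\<dots> = d * sqrt (S j) * sqrt (S j')" using sv jj by simp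
        finally show ?thesis using False by simp
      qed
    qed simp
    finally show ?thesis by (simp add: W_def B_def)
  qed
  have main: "a0 \<le> (sqrt (((2 - d) powr (1 - 2/p) * g p + d * Msq p) / (1 - d) * (real k powr (1 - 2/p) * Q powr (2/p)))
                 + sqrt 2 * \<eta> / sqrt (1 - d))\<^sup>2"
    by (rule fin_main[OF p _ d Pnn[of 0] P0Q eta0 X0 H1 H2 B2 Wb a1b Msq_ge_g[OF p]]) (use k in simp)
  have F0: "0 \<le> ((2 - d) powr (1 - 2/p) * g p + d * Msq p) / (1 - d)"
  proof -
    have "0 \<le> g p" using p by (simp add: g_def)
    moreover have "0 \<le> Msq p" using Msq_ge_2[OF p] by (smt (verit) powr_ge_zero)
    ultimately show ?thesis using d by simp
  qed
  have "NT \<le> (((2 - d) powr (1 - 2/p) * g p + d * Msq p) / (1 - d)) powr (p/2) * Q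
            + 2 powr (p/2) * real k powr (1 - p/2) * \<eta> powr p / (1 - d) powr (p/2)"
    by (rule fin_p[OF p _ _ F0 eta0 d(2) _ main NTb]) (use k order_trans[OF Pnn[of 0] P0Q] in \<open>auto simp: a0_def sum_nonneg\<close>)
  then show ?thesis using QR by (simp add: NT_def Cp_Msq R_def)
qed


lemma core:
  fixes A :: "nat \<Rightarrow> nat \<Rightarrow> real" and m n k l :: nat and d p \<eta> :: real
    and x xs :: "nat \<Rightarrow> real" and T :: "nat set"
  assumes k: "0 < k" and l: "0 < l" and n: "n = (l + 1) * k"
    and rip: "ripP A m n (2 * k) d"
    and d: "1/2 \<le> d" "d < 1" and p: "0 < p" "p < 1"
    and T: "T \<subseteq> {..<n}" "card T = k"
    and eta: "norm2 m (matvec A n (\<lambda>j. x j - xs j)) \<le> \<eta>"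
    and mini: "pnorm_pow p n xs \<le> pnorm_pow p n x"
    and C1: "Cp d p < 1"
  shows "pnorm_pow p n (\<lambda>j. x j - xs j) \<le> 2 * (1 + Cp d p) / (1 - Cp d p) * (\<Sum>j\<in>{..<n} - T. \<bar>x j\<bar> powr p)
          + 2 / (1 - Cp d p) * (2 powr (p/2) * real k powr (1 - p/2) * \<eta> powr p / (1 - d) powr (p/2))"
proof -
  define h where "h j = x j - xs j" for j
  define R where "R = {..<n} - T"
  have fT: "finite T" using T finite_subset by blast
  have fR: "finite R" by (simp add: R_def)
  have TR: "T \<inter> R = {}" "T \<union> R = {..<n}" using T by (auto simp: R_def)
  have split: "(\<Sum>j<n. F j) = (\<Sum>j\<in>T. F j) + (\<Sum>j\<in>R. F j)" for F :: "nat \<Rightarrow> real"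
  proof -
    have "(\<Sum>j<n. F j) = (\<Sum>j\<in>T \<union> R. F j)" using TR by simp
    also have "\<dots> = (\<Sum>j\<in>T. F j) + (\<Sum>j\<in>R. F j)" using fT fR TR by (intro sum.union_disjoint) auto
    finally show ?thesis .
  qed
  define a where "a = (\<Sum>j\<in>T. \<bar>h j\<bar> powr p)"
  define b where "b = (\<Sum>j\<in>R. \<bar>h j\<bar> powr p)"
  define X where "X = (\<Sum>j\<in>R. \<bar>x j\<bar> powr p)"
  define C where "C = Cp d p"
  define D where "D = 2 powr (p/2) * real k powr (1 - p/2) * \<eta> powr p / (1 - d) powr (p/2)"
  have C0: "0 \<le> C" by (simp add: C_def Cp_def)
  have C1': "C < 1" using C1 by (simp add: C_def)
  have D0: "0 \<le> D" using d by (simp add: D_def)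
  have X0: "0 \<le> X" by (simp add: X_def sum_nonneg)
  have cone: "b \<le> a + 2 * X"
  proof -
    have xsh: "xs j = x j - h j" for j by (simp add: h_def)
    have t1: "\<bar>x j\<bar> powr p - \<bar>h j\<bar> powr p \<le> \<bar>x j - h j\<bar> powr p" for j
      using abs_powr_subadd[of p "x j - h j" "h j"] p by simp
    have t2: "\<bar>h j\<bar> powr p - \<bar>x j\<bar> powr p \<le> \<bar>x j - h j\<bar> powr p" for j
      using abs_powr_subadd[of p "h j - x j" "x j"] p by (simp add: abs_minus_commute)
    have "(\<Sum>j\<in>T. \<bar>x j\<bar> powr p - \<bar>h j\<bar> powr p) + (\<Sum>j\<in>R. \<bar>h j\<bar> powr p - \<bar>x j\<bar> powr p)
          \<le> (\<Sum>j\<in>T. \<bar>x j - h j\<bar> powr p) + (\<Sum>j\<in>R. \<bar>x j - h j\<bar> powr p)"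
      using t1 t2 by (intro add_mono sum_mono) auto
    also have "\<dots> = pnorm_pow p n xs" unfolding pnorm_pow_def xsh by (rule split[symmetric])
    also have "\<dots> \<le> pnorm_pow p n x" by (rule mini)
    also have "\<dots> = (\<Sum>j\<in>T. \<bar>x j\<bar> powr p) + X" unfolding pnorm_pow_def X_def by (rule split)
    finally show ?thesis unfolding a_def b_def X_def by (simp add: sum_subtractf)
  qed
  have card_R: "card R = l * k" using card_Diff_subset[OF fT T(1)] T n by (simp add: R_def)
  obtain \<sigma> where sig: "bij_betw \<sigma> {..<l * k} R"
    and srt: "\<forall>i j. i \<le> j \<longrightarrow> j < l * k \<longrightarrow> \<bar>h (\<sigma> j)\<bar> \<le> \<bar>h (\<sigma> i)\<bar>"
    using sort_perm[OF fR card_R, of h] by blast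
  have nsp: "a \<le> C * b + D"
    unfolding a_def b_def C_def D_def R_def
    by (rule nsp_main[OF k l n rip d p T _ _ eta[folded h_def]]) (use sig srt R_def in auto)
  have b: "b \<le> (2 * X + D) / (1 - C)"
  proof -
    have "b \<le> C * b + D + 2 * X" using cone nsp by linarith
    then have "(1 - C) * b \<le> 2 * X + D" by (simp add: algebra_simps)
    then show ?thesis using C1' by (simp add: field_simps)
  qed
  have "pnorm_pow p n h = a + b" unfolding pnorm_pow_def a_def b_def by (rule split)
  also have "\<dots> \<le> (1 + C) * b + D" using nsp by (simp add: algebra_simps)
  also have "\<dots> \<le> (1 + C) * ((2 * X + D) / (1 - C)) + D" using b C0 by (intro add_mono mult_left_mono) auto
  also have "\<dots> = 2 * (1 + C) / (1 - C) * X + 2 / (1 - C) * D"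
  proof -
    have ne: "1 - C \<noteq> 0" using C1' by simp
    define u where "u = 1 / (1 - C)"
    have u1: "(1 - C) * u = 1" using ne by (simp add: u_def)
    have e1: "(2 * X + D) / (1 - C) = (2 * X + D) * u" by (simp add: u_def)
    have e2: "2 * (1 + C) / (1 - C) = 2 * (1 + C) * u" by (simp add: u_def)
    have e3: "2 / (1 - C) = 2 * u" by (simp add: u_def)
    have "(1 + C) * ((2 * X + D) * u) + D - (2 * (1 + C) * u * X + 2 * u * D) = D * (1 - (1 - C) * u)"
      by (simp add: algebra_simps)
    then have "(1 + C) * ((2 * X + D) * u) + D = 2 * (1 + C) * u * X + 2 * u * D" using u1 by simp
    then show ?thesis unfolding e1 e2 e3 by simp
  qed
  finally have fin: "pnorm_pow p n h \<le> 2 * (1 + C) / (1 - C) * X + 2 / (1 - C) * D" .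
  have hh: "h = (\<lambda>j. x j - xs j)" by (simp add: h_def fun_eq_iff)
  show ?thesis using fin unfolding hh C_def D_def X_def R_def .
qed

theorem theorem1:
  fixes k l m n :: nat and A :: "nat \<Rightarrow> nat \<Rightarrow> real"
    and x e y xs :: "nat \<Rightarrow> real" and \<epsilon> p :: real
  assumes "k > 0" "l > 0" "m > 0" and "n = (l + 1) * k"
    and "sqrt 2 / 2 \<le> ric A m n (2 * k)" "ric A m n (2 * k) < 1"
    and "\<epsilon> \<ge> 0" "norm2 m e \<le> \<epsilon>"
    and "\<forall>i<m. y i = matvec A n x i + e i"
    and "0 < p" "p < 1"
    and "norm2 m (\<lambda>i. y i - matvec A n xs i) \<le> \<epsilon>"
    and "\<forall>\<gamma>. norm2 m (\<lambda>i. y i - matvec A n \<gamma> i) \<le> \<epsilon> \<longrightarrow> pnorm p n xs \<le> pnorm p n \<gamma>"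
    and "Cp (ric A m n (2 * k)) p < 1"
  shows "(pnorm_pow p n (\<lambda>j. x j - xs j)
           \<le> 2 * (1 + Cp (ric A m n (2 * k)) p) / (1 - Cp (ric A m n (2 * k)) p)
               * (\<Sum>j\<in>{k..<n}. \<bar>x j\<bar> powr p)
             + 2 powr (3 * p / 2 + 1) / ((1 - ric A m n (2 * k)) powr (p / 2) * (1 - Cp (ric A m n (2 * k)) p))
               * real k powr (1 - p / 2) * \<epsilon> powr p)
         \<and> (\<epsilon> = 0 \<and> sparse k n x \<longrightarrow> (\<forall>j<n. xs j = x j))"
proof -
  note asm = assms
  define \<delta> where "\<delta> = ric A m n (2 * k)"
  have k: "0 < k" and l: "0 < l" and n: "n = (l + 1) * k" using assms by auto
  have n0: "0 < n" using k n by simp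
  have kn: "k \<le> n" using n by simp
  have p: "0 < p" "p < 1" using assms by auto
  have eps: "0 \<le> \<epsilon>" using assms by simp
  have rip: "ripP A m n (2 * k) \<delta>"
    unfolding ripP_def \<delta>_def using ric_prop[of "2 * k" n] k n0 by auto
  have d: "1/2 \<le> \<delta>" "\<delta> < 1"
  proof -
    have "1 \<le> sqrt (2::real)" by simp
    moreover have "sqrt 2 / 2 \<le> \<delta>" using assms(5) by (simp add: \<delta>_def)
    ultimately show "1/2 \<le> \<delta>" by linarith
    show "\<delta> < 1" using assms(6) by (simp add: \<delta>_def)
  qed
  have C1: "Cp \<delta> p < 1" using assms(14) by (simp add: \<delta>_def)
  have eta: "norm2 m (matvec A n (\<lambda>j. x j - xs j)) \<le> 2 * \<epsilon>"
  proof -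
    have "norm2 m (matvec A n (\<lambda>j. x j - xs j)) = L2_set (\<lambda>i. (y i - matvec A n xs i) + (- e i)) {..<m}"
      unfolding norm2_L2 using assms(9) by (intro L2_set_cong) (auto simp: matvec_diff)
    also have "\<dots> \<le> L2_set (\<lambda>i. y i - matvec A n xs i) {..<m} + L2_set (\<lambda>i. - e i) {..<m}"
      by (rule L2_set_triangle_ineq)
    also have "\<dots> = norm2 m (\<lambda>i. y i - matvec A n xs i) + norm2 m e"
      using L2_set_neg[of e "{..<m}"] by (simp add: norm2_L2)
    also have "\<dots> \<le> 2 * \<epsilon>" using assms(8,12) by simp
    finally show ?thesis .
  qed
  have mini: "pnorm_pow p n xs \<le> pnorm_pow p n x"
  proof -
    have "norm2 m (\<lambda>i. y i - matvec A n x i) = norm2 m e"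
      unfolding norm2_L2 using assms(9) by (intro L2_set_cong) auto
    then have "pnorm p n xs \<le> pnorm p n x" using assms(8,13) by simp
    then have le: "pnorm_pow p n xs powr (1/p) \<le> pnorm_pow p n x powr (1/p)" unfolding pnorm_def .
    have idz: "(z powr (1/p)) powr p = z" if "0 \<le> z" for z
    proof -
      have "(z powr (1/p)) powr p = z powr ((1/p) * p)" by (simp add: powr_powr)
      also have "(1/p) * p = 1" using p by simp
      finally show ?thesis using that by simp
    qed
    have a0: "0 \<le> pnorm_pow p n xs" "0 \<le> pnorm_pow p n x" by (simp_all add: pnorm_pow_def sum_nonneg)
    have "(pnorm_pow p n xs powr (1/p)) powr p \<le> (pnorm_pow p n x powr (1/p)) powr p"
      by (rule powr_mono2) (use p le in auto)
    then show ?thesis unfolding idz[OF a0(1)] idz[OF a0(2)] .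
  qed
  have pw: "(2::real) powr (3 * p / 2 + 1) = 2 * 2 powr (p/2) * 2 powr p"
  proof -
    have "3 * p / 2 + 1 = p/2 + p + 1" by simp
    then have "(2::real) powr (3 * p / 2 + 1) = 2 powr (p/2) * 2 powr p * 2 powr 1" by (simp only: powr_add)
    then show ?thesis by simp
  qed
  have part1: "pnorm_pow p n (\<lambda>j. x j - xs j)
           \<le> 2 * (1 + Cp \<delta> p) / (1 - Cp \<delta> p) * (\<Sum>j\<in>{k..<n}. \<bar>x j\<bar> powr p)
             + 2 powr (3 * p / 2 + 1) / ((1 - \<delta>) powr (p / 2) * (1 - Cp \<delta> p)) * real k powr (1 - p / 2) * \<epsilon> powr p"
  proof -
    have T: "{..<k} \<subseteq> {..<n}" "card {..<k} = k" using kn by auto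
    have R: "{..<n} - {..<k} = {k..<n}" by auto
    have c: "pnorm_pow p n (\<lambda>j. x j - xs j) \<le> 2 * (1 + Cp \<delta> p) / (1 - Cp \<delta> p) * (\<Sum>j\<in>{k..<n}. \<bar>x j\<bar> powr p)
          + 2 / (1 - Cp \<delta> p) * (2 powr (p/2) * real k powr (1 - p/2) * (2 * \<epsilon>) powr p / (1 - \<delta>) powr (p/2))"
      using core[OF k l n rip d p T eta mini C1] unfolding R .
    have "2 / (1 - Cp \<delta> p) * (2 powr (p/2) * real k powr (1 - p/2) * (2 * \<epsilon>) powr p / (1 - \<delta>) powr (p/2))
        = 2 powr (3 * p / 2 + 1) / ((1 - \<delta>) powr (p / 2) * (1 - Cp \<delta> p)) * real k powr (1 - p / 2) * \<epsilon> powr p"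
    proof -
      have "(2 * \<epsilon>) powr p = 2 powr p * \<epsilon> powr p" using eps by (simp add: powr_mult)
      then show ?thesis unfolding pw by (simp add: field_simps)
    qed
    then show ?thesis using c by simp
  qed
  have part2: "\<epsilon> = 0 \<and> sparse k n x \<longrightarrow> (\<forall>j<n. xs j = x j)"
  proof (intro impI allI)
    fix j assume h: "\<epsilon> = 0 \<and> sparse k n x" and j: "j < n"
    define S0 where "S0 = {j. j < n \<and> x j \<noteq> 0}"
    have "card S0 \<le> k" using h by (simp add: sparse_def S0_def)
    then obtain T where T: "S0 \<subseteq> T" "T \<subseteq> {..<n}" "card T = k"
      using exists_subset_between[of S0 k "{..<n}"] kn by (auto simp: S0_def)
    have c: "pnorm_pow p n (\<lambda>j. x j - xs j) \<le> 2 * (1 + Cp \<delta> p) / (1 - Cp \<delta> p) * (\<Sum>j\<in>{..<n} - T. \<bar>x j\<bar> powr p)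
          + 2 / (1 - Cp \<delta> p) * (2 powr (p/2) * real k powr (1 - p/2) * (2 * \<epsilon>) powr p / (1 - \<delta>) powr (p/2))"
      by (rule core[OF k l n rip d p T(2,3) eta mini C1])
    have "(\<Sum>j\<in>{..<n} - T. \<bar>x j\<bar> powr p) = 0"
      using T by (intro sum.neutral) (auto simp: S0_def)
    then have "pnorm_pow p n (\<lambda>j. x j - xs j) \<le> 0" using c h by simp
    then have "(\<Sum>i<n. \<bar>x i - xs i\<bar> powr p) = 0"
      unfolding pnorm_pow_def by (meson antisym sum_nonneg powr_ge_zero)
    then have "\<bar>x j - xs j\<bar> powr p = 0" using j by (simp add: sum_nonneg_eq_0_iff)
    then show "xs j = x j" by simp
  qed
  show ?thesis using part1 part2 by (simp add: \<delta>_def)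
qed


end
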